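(* For $n\ge 2$ let $s_n$ be the number of symmetry classes of bi-vincular patterns of length $n$. Writing $n=4m+r$ with $r\in\{0,1,2,3\}$, we have \begin{align*} s_{4m}&=2^{6m-1}(2m)!+2^{8m-1}(4m)!+2^{4m-1}I(4m)+2^{2m}\frac{(2m-1)!}{(m-1)!},\\ s_{4m+1}&=2^{6m-1}(2m)!+2^{8m+1}(4m+1)!+2^{4m}I(4m+1)+2^{2m}\frac{(2m-1)!}{(m-1)!},\\ s_{4m+2}&=2^{6m+2}(2m+1)!+2^{8m+3}(4m+2)!+2^{4m+1}I(4m+2),\\ s_{4m+3}&=2^{6m+2}(2m+1)!+2^{8m+5}(4m+3)!+2^{4m+2}I(4m+3), \end{align*} where $I(n)=\sum_{k=0}^{\lfloor n/2\rfloor}\frac{n!}{k!\,(n-2k)!\,2^k}$ is the number of involutions of $[n]$.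
   Context: A bi-vincular pattern of length $k$ is a triple $p=(\sigma,X,Y)$ with $\sigma$ a permutation of $[k]=\{1,\dots,k\}$ and $X,Y\subseteq\{0,1,\dots,k\}$; there are $4^{k+1}k!$ of them. For such $p$ define $p^{i}=(\sigma^{-1},Y,X)$, $p^{r}=(\sigma^{r},\{k-x:x\in X\},Y)$, $p^{c}=(\sigma^{c},X,\{k-y:y\in Y\})$, where $\sigma^{-1}$ is the inverse permutation, $\sigma^r_j=\sigma_{k+1-j}$ and $\sigma^c_j=k+1-\sigma_j$. Two patterns are in the same symmetry class if one is obtained from the other by applying a finite sequence of the maps $p\mapsto p^i,p^r,p^c$. *)

theory Defs
  imports "HOL-Combinatorics.Permutations"
begin

type_synonym bvpat = "(nat \<Rightarrow> nat) \<times> nat set \<times> nat set"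

definition bvpats :: "nat \<Rightarrow> bvpat set" where
  "bvpats k = {(\<sigma>, X, Y). \<sigma> permutes {1..k} \<and> X \<subseteq> {0..k} \<and> Y \<subseteq> {0..k}}"

definition rev_perm :: "nat \<Rightarrow> (nat \<Rightarrow> nat) \<Rightarrow> nat \<Rightarrow> nat" where
  "rev_perm k \<sigma> j = (if j \<in> {1..k} then \<sigma> (k + 1 - j) else j)"

definition comp_perm :: "nat \<Rightarrow> (nat \<Rightarrow> nat) \<Rightarrow> nat \<Rightarrow> nat" where
  "comp_perm k \<sigma> j = (if j \<in> {1..k} then k + 1 - \<sigma> j else j)"

definition pat_i :: "nat \<Rightarrow> bvpat \<Rightarrow> bvpat" where
  "pat_i k p = (case p of (\<sigma>, X, Y) \<Rightarrow> (inv \<sigma>, Y, X))"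

definition pat_r :: "nat \<Rightarrow> bvpat \<Rightarrow> bvpat" where
  "pat_r k p = (case p of (\<sigma>, X, Y) \<Rightarrow> (rev_perm k \<sigma>, (\<lambda>x. k - x) ` X, Y))"

definition pat_c :: "nat \<Rightarrow> bvpat \<Rightarrow> bvpat" where
  "pat_c k p = (case p of (\<sigma>, X, Y) \<Rightarrow> (comp_perm k \<sigma>, X, (\<lambda>y. k - y) ` Y))"

definition sym_step :: "nat \<Rightarrow> bvpat rel" where
  "sym_step k = {(p, q). q = pat_i k p \<or> q = pat_r k p \<or> q = pat_c k p}"

definition sym_class :: "nat \<Rightarrow> bvpat \<Rightarrow> bvpat set" where
  "sym_class k p = {q. (p, q) \<in> (sym_step k)\<^sup>*}"

definition num_sym_classes :: "nat \<Rightarrow> nat" where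
  "num_sym_classes k = card (sym_class k ` bvpats k)"

definition num_involutions :: "nat \<Rightarrow> nat" where
  "num_involutions n = (\<Sum>k\<le>n div 2. fact n div (fact k * fact (n - 2 * k) * 2 ^ k))"

end

theory Submission
  imports Defs "HOL-Algebra.Group_Action"
begin


lemma permutes_fix_remove:
  assumes "\<sigma> permutes S" "\<forall>a\<in>A. \<sigma> a = a"
  shows "\<sigma> permutes (S - A)"
  using assms unfolding permutes_def by (metis Diff_iff)

definition InvS :: "'a set \<Rightarrow> ('a \<Rightarrow> 'a) set" where
  "InvS S = {\<sigma>. \<sigma> permutes S \<and> (\<forall>x\<in>S. \<sigma> (\<sigma> x) = x)}"

fun invn :: "nat \<Rightarrow> nat" where
  "invn 0 = 1" | "invn (Suc 0) = 1" | "invn (Suc (Suc n)) = invn (Suc n) + Suc n * invn n"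

lemma InvS_fix: assumes "a \<in> S" shows "{\<sigma> \<in> InvS S. \<sigma> a = a} = InvS (S - {a})"
proof (rule Set.set_eqI, rule iffI)
  fix \<sigma> assume "\<sigma> \<in> {\<sigma> \<in> InvS S. \<sigma> a = a}"
  then show "\<sigma> \<in> InvS (S - {a})" unfolding InvS_def using permutes_fix_remove[of \<sigma> S "{a}"] by auto
next
  fix \<sigma> assume s: "\<sigma> \<in> InvS (S - {a})"
  then have p: "\<sigma> permutes (S - {a})" by (simp add: InvS_def)
  then have "\<sigma> a = a" by (simp add: permutes_not_in)
  moreover have "\<sigma> permutes S" using p permutes_subset by blast
  ultimately show "\<sigma> \<in> {\<sigma> \<in> InvS S. \<sigma> a = a}" using s unfolding InvS_def by auto
qed

lemma InvS_fiber:
  assumes a: "a \<in> S" and b: "b \<in> S" and ab: "a \<noteq> b"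
  shows "{\<sigma> \<in> InvS S. \<sigma> a = b} = (\<lambda>\<tau>. transpose a b \<circ> \<tau>) ` InvS (S - {a, b})"
proof (rule Set.set_eqI, rule iffI)
  fix \<sigma> assume "\<sigma> \<in> {\<sigma> \<in> InvS S. \<sigma> a = b}"
  then have s: "\<sigma> \<in> InvS S" and sab: "\<sigma> a = b" by auto
  have p: "\<sigma> permutes S" and iv: "\<And>x. x \<in> S \<Longrightarrow> \<sigma> (\<sigma> x) = x" using s by (auto simp: InvS_def)
  have sb: "\<sigma> b = a" using iv[OF a] sab by simp
  define \<tau> where "\<tau> = transpose a b \<circ> \<sigma>"
  have tp: "\<tau> permutes S" unfolding \<tau>_def by (rule permutes_compose[OF p permutes_swap_id[OF a b]])
  have "\<tau> a = a" "\<tau> b = b" using sab sb by (auto simp: \<tau>_def)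
  then have tp2: "\<tau> permutes (S - {a, b})" using permutes_fix_remove[OF tp, of "{a,b}"] by auto
  have "\<forall>x\<in>S - {a,b}. \<tau> (\<tau> x) = x"
  proof
    fix x assume x: "x \<in> S - {a,b}"
    have xS: "x \<in> S" "x \<noteq> a" "x \<noteq> b" using x by auto
    have "\<sigma> x \<noteq> a"
    proof
      assume "\<sigma> x = a" then have "\<sigma> (\<sigma> x) = b" using sab by simp
      then show False using iv[OF xS(1)] xS by simp
    qed
    moreover have "\<sigma> x \<noteq> b"
    proof
      assume "\<sigma> x = b" then have "\<sigma> (\<sigma> x) = a" using sb by simp
      then show False using iv[OF xS(1)] xS by simp
    qed
    ultimately have "\<tau> x = \<sigma> x" by (simp add: \<tau>_def)
    moreover have "\<sigma> (\<sigma> x) = x" using xS iv by auto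
    ultimately show "\<tau> (\<tau> x) = x" using xS by (simp add: \<tau>_def)
  qed
  then have "\<tau> \<in> InvS (S - {a,b})" using tp2 by (simp add: InvS_def)
  moreover have "\<sigma> = transpose a b \<circ> \<tau>" unfolding \<tau>_def fun_eq_iff by simp
  ultimately show "\<sigma> \<in> (\<lambda>\<tau>. transpose a b \<circ> \<tau>) ` InvS (S - {a, b})" by blast
next
  fix \<sigma> assume "\<sigma> \<in> (\<lambda>\<tau>. transpose a b \<circ> \<tau>) ` InvS (S - {a, b})"
  then obtain \<tau> where t: "\<tau> \<in> InvS (S - {a,b})" and st: "\<sigma> = transpose a b \<circ> \<tau>" by blast
  have tp: "\<tau> permutes (S - {a,b})" and iv: "\<And>x. x \<in> S - {a,b} \<Longrightarrow> \<tau> (\<tau> x) = x"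
    using t by (auto simp: InvS_def)
  have ta: "\<tau> a = a" "\<tau> b = b" using tp by (auto simp: permutes_not_in)
  have tpS: "\<tau> permutes S" using tp permutes_subset by blast
  have "transpose a b \<circ> \<tau> permutes S" by (rule permutes_compose[OF tpS permutes_swap_id[OF a b]])
  moreover have "\<forall>x\<in>S. (transpose a b \<circ> \<tau>) ((transpose a b \<circ> \<tau>) x) = x"
  proof
    fix x assume x: "x \<in> S"
    show "(transpose a b \<circ> \<tau>) ((transpose a b \<circ> \<tau>) x) = x"
    proof (cases "x \<in> {a,b}")
      case True then show ?thesis using ta by auto
    next
      case False
      then have "\<tau> x \<in> S - {a,b}" using x permutes_in_image[OF tp] by auto
      then show ?thesis using False x iv by auto
    qed
  qed
  moreover have "(transpose a b \<circ> \<tau>) a = b" using ta by simp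
  ultimately show "\<sigma> \<in> {\<sigma> \<in> InvS S. \<sigma> a = b}" using st by (simp add: InvS_def)
qed


lemma inj_transpose_comp: "inj (\<lambda>\<tau>. transpose a b \<circ> \<tau>)"
  by (rule injI) (auto simp: fun_eq_iff intro: transpose_eq_imp_eq)

lemma InvS_finite: "finite S \<Longrightarrow> finite (InvS S)"
  by (rule finite_subset[OF _ finite_permutations]) (auto simp: InvS_def)

lemma card_InvS_aux: "finite S \<Longrightarrow> card S = n \<Longrightarrow> card (InvS S) = invn n"
proof (induction n arbitrary: S rule: less_induct)
  case (less n)
  show ?case
  proof (cases "S = {}")
    case True
    then have "InvS S = {id}" by (auto simp: InvS_def)
    then show ?thesis using True less.prems by simp
  next
    case False
    then obtain a where a: "a \<in> S" by blast
    have "card S > 0" using a less.prems(1) by (auto simp: card_gt_0_iff)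
    then have n1: "n \<ge> 1" using less.prems(2) by simp
    let ?F = "\<lambda>b. {\<sigma> \<in> InvS S. \<sigma> a = b}"
    have inS: "\<sigma> a \<in> S" if "\<sigma> \<in> InvS S" for \<sigma>
    proof -
      from that have "\<sigma> permutes S" by (simp add: InvS_def)
      then show ?thesis using a by (simp add: permutes_in_image)
    qed
    have split: "InvS S = ?F a \<union> (\<Union>b\<in>S - {a}. ?F b)"
    proof (rule equalityI)
      show "InvS S \<subseteq> ?F a \<union> (\<Union>b\<in>S - {a}. ?F b)"
      proof
        fix \<sigma> assume s: "\<sigma> \<in> InvS S"
        show "\<sigma> \<in> ?F a \<union> (\<Union>b\<in>S - {a}. ?F b)"
        proof (cases "\<sigma> a = a")
          case True then show ?thesis using s by blast
        next
          case False then have "\<sigma> a \<in> S - {a}" using inS[OF s] by blast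
          then show ?thesis using s by blast
        qed
      qed
    qed blast
    have fin: "finite (InvS S)" using InvS_finite less.prems by blast
    have c1: "card (?F a) = invn (n - 1)"
    proof -
      have "card (S - {a}) = n - 1" using less.prems a by simp
      then have "card (InvS (S - {a})) = invn (n - 1)" using less.IH[of "n-1" "S - {a}"] less.prems n1 by simp
      then show ?thesis using InvS_fix[OF a] by simp
    qed
    have c2: "card (?F b) = invn (n - 2)" if b: "b \<in> S - {a}" for b
    proof -
      have cs: "card (S - {a,b}) = n - 2" using less.prems a b by (auto simp: card_Diff_subset)
      have "card (?F b) = card ((\<lambda>\<tau>. transpose a b \<circ> \<tau>) ` InvS (S - {a,b}))"
      proof -
        have "b \<in> S" "a \<noteq> b" using b by auto
        then show ?thesis using InvS_fiber[OF a] by simp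
      qed
      also have "\<dots> = card (InvS (S - {a,b}))"
        by (rule card_image[OF inj_on_subset[OF inj_transpose_comp subset_UNIV]])
      also have "\<dots> = invn (n - 2)"
        using less.IH[of "n-2" "S - {a,b}"] less.prems n1 cs by simp
      finally show ?thesis .
    qed
    have fin2: "finite (?F b)" for b using fin by simp
    have "card (InvS S) = card (?F a) + card (\<Union>b\<in>S - {a}. ?F b)"
      by (subst split, rule card_Un_disjoint) (use fin2 less.prems in auto)
    also have "card (\<Union>b\<in>S - {a}. ?F b) = (\<Sum>b\<in>S - {a}. card (?F b))"
      by (rule card_UN_disjoint) (use fin2 less.prems in auto)
    also have "\<dots> = (\<Sum>b\<in>S - {a}. invn (n - 2))" using c2 by simp
    also have "\<dots> = (n - 1) * invn (n - 2)" using less.prems a by simp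
    finally have eq: "card (InvS S) = invn (n - 1) + (n - 1) * invn (n - 2)" using c1 by simp
    show ?thesis
    proof (cases n)
      case 0 then show ?thesis using n1 by simp
    next
      case (Suc m) then show ?thesis using eq by (cases m) auto
    qed
  qed
qed



abbreviation invf :: "('a \<Rightarrow> 'b) \<Rightarrow> 'b \<Rightarrow> 'a" where "invf f \<equiv> inv_into UNIV f"


definition inv_on :: "('a \<Rightarrow> 'a) \<Rightarrow> 'a set \<Rightarrow> bool" where
  "inv_on \<rho> S \<longleftrightarrow> (\<forall>x\<in>S. \<rho> x \<in> S \<and> \<rho> (\<rho> x) = x \<and> \<rho> x \<noteq> x)"

definition CenS :: "('a \<Rightarrow> 'a) \<Rightarrow> 'a set \<Rightarrow> ('a \<Rightarrow> 'a) set" where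
  "CenS \<rho> S = {\<sigma>. \<sigma> permutes S \<and> (\<forall>x\<in>S. \<sigma> (\<rho> x) = \<rho> (\<sigma> x))}"

lemma inv_onD:
  assumes "inv_on \<rho> S" "x \<in> S"
  shows "\<rho> x \<in> S" "\<rho> (\<rho> x) = x" "\<rho> x \<noteq> x"
  using assms by (auto simp: inv_on_def)

lemma inv_on_inj:
  assumes "inv_on \<rho> S" "x \<in> S" "y \<in> S" "\<rho> x = \<rho> y"
  shows "x = y"
proof -
  have "\<rho> (\<rho> x) = \<rho> (\<rho> y)" using assms(4) by simp
  then show ?thesis using inv_onD(2)[OF assms(1,2)] inv_onD(2)[OF assms(1,3)] by simp
qed

lemma inv_on_remove:
  assumes r: "inv_on \<rho> S" and a: "a \<in> S"
  shows "inv_on \<rho> (S - {a, \<rho> a})"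
  unfolding inv_on_def
proof
  fix x assume x: "x \<in> S - {a, \<rho> a}"
  then have xS: "x \<in> S" "x \<noteq> a" "x \<noteq> \<rho> a" by auto
  have "\<rho> x \<noteq> a"
  proof
    assume "\<rho> x = a" then have "\<rho> (\<rho> x) = \<rho> a" by simp
    then show False using inv_onD(2)[OF r xS(1)] xS by simp
  qed
  moreover have "\<rho> x \<noteq> \<rho> a" using inv_on_inj[OF r xS(1) a] xS by blast
  ultimately show "\<rho> x \<in> S - {a, \<rho> a} \<and> \<rho> (\<rho> x) = x \<and> \<rho> x \<noteq> x"
    using inv_onD[OF r xS(1)] by simp
qed

lemma card_remove_pair:
  assumes "finite S" "inv_on \<rho> S" "a \<in> S"
  shows "card (S - {a, \<rho> a}) = card S - 2"
proof -
  have "\<rho> a \<in> S" "\<rho> a \<noteq> a" using inv_onD[OF assms(2,3)] by auto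
  then show ?thesis using assms by (simp add: card_Diff_subset)
qed

lemma inv_on_even: "finite S \<Longrightarrow> inv_on \<rho> S \<Longrightarrow> card S = n \<Longrightarrow> even n"
proof (induction n arbitrary: S rule: less_induct)
  case (less n)
  show ?case
  proof (cases "S = {}")
    case True then show ?thesis using less.prems by simp
  next
    case False
    then obtain a where a: "a \<in> S" by blast
    have "\<rho> a \<in> S" "\<rho> a \<noteq> a" using inv_onD[OF less.prems(2) a] by auto
    then have "card {a, \<rho> a} = 2" by simp
    moreover have "card {a, \<rho> a} \<le> card S" using less.prems(1) a \<open>\<rho> a \<in> S\<close> by (intro card_mono) auto
    ultimately have n2: "n \<ge> 2" using less.prems(3) by simp
    have "even (n - 2)"
      using less.IH[of "n - 2" "S - {a, \<rho> a}"] n2 less.prems inv_on_remove[OF less.prems(2) a]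
        card_remove_pair[OF less.prems(1,2) a] by simp
    then show ?thesis using n2 by simp
  qed
qed

lemma CenS_comp:
  assumes "\<sigma> \<in> CenS \<rho> S" "\<tau> \<in> CenS \<rho> S"
  shows "\<sigma> \<circ> \<tau> \<in> CenS \<rho> S"
proof -
  have p: "\<sigma> permutes S" "\<tau> permutes S" using assms by (auto simp: CenS_def)
  have c: "\<And>x. x \<in> S \<Longrightarrow> \<sigma> (\<rho> x) = \<rho> (\<sigma> x)" "\<And>x. x \<in> S \<Longrightarrow> \<tau> (\<rho> x) = \<rho> (\<tau> x)"
    using assms by (auto simp: CenS_def)
  have "\<forall>x\<in>S. (\<sigma> \<circ> \<tau>) (\<rho> x) = \<rho> ((\<sigma> \<circ> \<tau>) x)"
  proof
    fix x assume x: "x \<in> S"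
    have "\<tau> x \<in> S" using x p(2) by (simp add: permutes_in_image)
    then show "(\<sigma> \<circ> \<tau>) (\<rho> x) = \<rho> ((\<sigma> \<circ> \<tau>) x)" using c x by simp
  qed
  then show ?thesis using permutes_compose[OF p(2,1)] by (simp add: CenS_def)
qed

lemma CenS_inv:
  assumes "\<sigma> \<in> CenS \<rho> S" "inv_on \<rho> S"
  shows "invf \<sigma> \<in> CenS \<rho> S"
proof -
  have p: "\<sigma> permutes S" using assms by (auto simp: CenS_def)
  have c: "\<And>x. x \<in> S \<Longrightarrow> \<sigma> (\<rho> x) = \<rho> (\<sigma> x)" using assms by (auto simp: CenS_def)
  have "\<forall>x\<in>S. invf \<sigma> (\<rho> x) = \<rho> (invf \<sigma> x)"
  proof
    fix x assume x: "x \<in> S"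
    define y where "y = invf \<sigma> x"
    have y: "y \<in> S" "\<sigma> y = x" using x p unfolding y_def
      by (auto simp: permutes_inverses permutes_in_image[OF permutes_inv[OF p]])
    have "\<sigma> (\<rho> y) = \<rho> x" using c[OF y(1)] y(2) by simp
    then have "invf \<sigma> (\<rho> x) = \<rho> y" using permutes_inv_eq[OF p] by blast
    then show "invf \<sigma> (\<rho> x) = \<rho> (invf \<sigma> x)" by (simp add: y_def)
  qed
  then show ?thesis using permutes_inv[OF p] by (simp add: CenS_def)
qed

lemma CenS_fix:
  assumes r: "inv_on \<rho> S" and a: "a \<in> S"
  shows "{\<sigma> \<in> CenS \<rho> S. \<sigma> a = a} = CenS \<rho> (S - {a, \<rho> a})"
proof (rule Set.set_eqI, rule iffI)
  fix \<sigma> assume "\<sigma> \<in> {\<sigma> \<in> CenS \<rho> S. \<sigma> a = a}"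
  then have p: "\<sigma> permutes S" and c: "\<forall>x\<in>S. \<sigma> (\<rho> x) = \<rho> (\<sigma> x)" and sa: "\<sigma> a = a"
    by (auto simp: CenS_def)
  have "\<sigma> (\<rho> a) = \<rho> a" using c a sa by simp
  then have "\<sigma> permutes (S - {a, \<rho> a})" using permutes_fix_remove[OF p, of "{a, \<rho> a}"] sa by simp
  then show "\<sigma> \<in> CenS \<rho> (S - {a, \<rho> a})" using c by (simp add: CenS_def)
next
  fix \<sigma> assume "\<sigma> \<in> CenS \<rho> (S - {a, \<rho> a})"
  then have p: "\<sigma> permutes (S - {a, \<rho> a})" and c: "\<forall>x\<in>S - {a, \<rho> a}. \<sigma> (\<rho> x) = \<rho> (\<sigma> x)"
    by (auto simp: CenS_def)
  have f: "\<sigma> a = a" "\<sigma> (\<rho> a) = \<rho> a" using p by (auto simp: permutes_not_in)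
  have pS: "\<sigma> permutes S" using p permutes_subset by blast
  have "\<forall>x\<in>S. \<sigma> (\<rho> x) = \<rho> (\<sigma> x)"
  proof
    fix x assume x: "x \<in> S"
    show "\<sigma> (\<rho> x) = \<rho> (\<sigma> x)"
    proof (cases "x = a \<or> x = \<rho> a")
      case True then show ?thesis using f inv_onD(2)[OF r a] by auto
    next
      case False then show ?thesis using c x by auto
    qed
  qed
  then show "\<sigma> \<in> {\<sigma> \<in> CenS \<rho> S. \<sigma> a = a}" using pS f by (simp add: CenS_def)
qed

lemma CenS_trans:
  assumes r: "inv_on \<rho> S" and a: "a \<in> S" and b: "b \<in> S"
  shows "\<exists>t\<in>CenS \<rho> S. t a = b"
proof -
  have ra: "\<rho> a \<in> S" "\<rho> (\<rho> a) = a" "\<rho> a \<noteq> a" using inv_onD[OF r a] by auto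
  have rb: "\<rho> b \<in> S" "\<rho> (\<rho> b) = b" "\<rho> b \<noteq> b" using inv_onD[OF r b] by auto
  consider "b = a" | "b = \<rho> a" | "b \<noteq> a" "b \<noteq> \<rho> a" by blast
  then show ?thesis
  proof cases
    case 1
    have "id \<in> CenS \<rho> S" by (simp add: CenS_def)
    then show ?thesis using 1 by (intro bexI[of _ id]) auto
  next
    case 2
    define t where "t = transpose a (\<rho> a)"
    have "\<forall>x\<in>S. t (\<rho> x) = \<rho> (t x)"
    proof
      fix x assume x: "x \<in> S"
      show "t (\<rho> x) = \<rho> (t x)"
      proof (cases "x = a \<or> x = \<rho> a")
        case True then show ?thesis using ra by (auto simp: t_def)
      next
        case False
        then have "\<rho> x \<noteq> a" "\<rho> x \<noteq> \<rho> a" using inv_onD(2)[OF r x] ra inv_on_inj[OF r x a] by auto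
        then show ?thesis using False by (simp add: t_def)
      qed
    qed
    moreover have "t permutes S" unfolding t_def by (rule permutes_swap_id[OF a ra(1)])
    ultimately have "t \<in> CenS \<rho> S" by (simp add: CenS_def)
    moreover have "t a = b" using 2 by (simp add: t_def)
    ultimately show ?thesis by blast
  next
    case 3
    have d1: "\<rho> b \<noteq> a" using 3 rb ra by (metis)
    have d2: "\<rho> b \<noteq> \<rho> a" using 3 inv_on_inj[OF r b a] by blast
    define t where "t = transpose a b \<circ> transpose (\<rho> a) (\<rho> b)"
    have tv: "t a = b" "t b = a" "t (\<rho> a) = \<rho> b" "t (\<rho> b) = \<rho> a"
      using 3 d1 d2 ra rb by (auto simp: t_def transpose_def)
    have tv2: "t x = x" if "x \<notin> {a, b, \<rho> a, \<rho> b}" for x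
      using that by (auto simp: t_def transpose_def)
    have "\<forall>x\<in>S. t (\<rho> x) = \<rho> (t x)"
    proof
      fix x assume x: "x \<in> S"
      consider "x = a" | "x = b" | "x = \<rho> a" | "x = \<rho> b" | "x \<notin> {a, b, \<rho> a, \<rho> b}" by blast
      then show "t (\<rho> x) = \<rho> (t x)"
      proof cases
        case 5
        have "\<rho> x \<notin> {a, b, \<rho> a, \<rho> b}"
        proof
          assume "\<rho> x \<in> {a, b, \<rho> a, \<rho> b}"
          then consider "\<rho> x = a" | "\<rho> x = b" | "\<rho> x = \<rho> a" | "\<rho> x = \<rho> b" by blast
          then show False
          proof cases
            case 1 then have "\<rho> (\<rho> x) = \<rho> a" by simp
            then show False using 5 inv_onD(2)[OF r x] by simp
          next
            case 2 then have "\<rho> (\<rho> x) = \<rho> b" by simp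
            then show False using 5 inv_onD(2)[OF r x] by simp
          next
            case 3 then show False using 5 inv_on_inj[OF r x a] by simp
          next
            case 4 then show False using 5 inv_on_inj[OF r x b] by simp
          qed
        qed
        then show ?thesis using tv2 5 by simp
      qed (use tv ra rb in auto)
    qed
    moreover have "t permutes S" unfolding t_def
      by (rule permutes_compose[OF permutes_swap_id[OF ra(1) rb(1)] permutes_swap_id[OF a b]])
    ultimately have "t \<in> CenS \<rho> S" by (simp add: CenS_def)
    then show ?thesis using tv by blast
  qed
qed

lemma inj_comp_left: "inj t \<Longrightarrow> inj (\<lambda>\<tau>. t \<circ> \<tau>)"
  by (rule injI) (auto simp: fun_eq_iff inj_eq)

lemma CenS_fiber:
  assumes r: "inv_on \<rho> S" and t: "t \<in> CenS \<rho> S" and ta: "t a = b"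
  shows "{\<sigma> \<in> CenS \<rho> S. \<sigma> a = b} = (\<lambda>\<tau>. t \<circ> \<tau>) ` {\<sigma> \<in> CenS \<rho> S. \<sigma> a = a}"
proof (rule Set.set_eqI, rule iffI)
  have tp: "t permutes S" using t by (simp add: CenS_def)
  fix \<sigma> assume s: "\<sigma> \<in> {\<sigma> \<in> CenS \<rho> S. \<sigma> a = b}"
  define \<tau> where "\<tau> = invf t \<circ> \<sigma>"
  have "\<tau> \<in> CenS \<rho> S" unfolding \<tau>_def using CenS_comp[OF CenS_inv[OF t r]] s by blast
  moreover have "\<tau> a = a"
  proof -
    have "invf t (t a) = a" by (rule permutes_inverses(2)[OF tp])
    then show ?thesis using s ta by (simp add: \<tau>_def)
  qed
  moreover have "\<sigma> = t \<circ> \<tau>" unfolding \<tau>_def fun_eq_iff using permutes_inverses(1)[OF tp] by simp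
  ultimately show "\<sigma> \<in> (\<lambda>\<tau>. t \<circ> \<tau>) ` {\<sigma> \<in> CenS \<rho> S. \<sigma> a = a}" by blast
next
  fix \<sigma> assume "\<sigma> \<in> (\<lambda>\<tau>. t \<circ> \<tau>) ` {\<sigma> \<in> CenS \<rho> S. \<sigma> a = a}"
  then obtain \<tau> where "\<tau> \<in> CenS \<rho> S" "\<tau> a = a" "\<sigma> = t \<circ> \<tau>" by blast
  then show "\<sigma> \<in> {\<sigma> \<in> CenS \<rho> S. \<sigma> a = b}" using CenS_comp[OF t] ta by auto
qed

lemma CenS_finite: "finite S \<Longrightarrow> finite (CenS \<rho> S)"
  by (rule finite_subset[OF _ finite_permutations]) (auto simp: CenS_def)

lemma card_CenS_aux:
  "finite S \<Longrightarrow> inv_on \<rho> S \<Longrightarrow> card S = n \<Longrightarrow> card (CenS \<rho> S) = 2 ^ (n div 2) * fact (n div 2)"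
proof (induction n arbitrary: S rule: less_induct)
  case (less n)
  show ?case
  proof (cases "S = {}")
    case True
    then have "CenS \<rho> S = {id}" by (auto simp: CenS_def)
    then show ?thesis using True less.prems by simp
  next
    case False
    then obtain a where a: "a \<in> S" by blast
    have r: "inv_on \<rho> S" using less.prems by simp
    have "\<rho> a \<in> S" "\<rho> a \<noteq> a" using inv_onD[OF r a] by auto
    then have "card {a, \<rho> a} = 2" by simp
    moreover have "card {a, \<rho> a} \<le> card S" using less.prems(1) a \<open>\<rho> a \<in> S\<close> by (intro card_mono) auto
    ultimately have n2: "n \<ge> 2" using less.prems(3) by simp
    have ev: "even n" using inv_on_even less.prems by blast
    let ?S' = "S - {a, \<rho> a}"
    have cS': "card (CenS \<rho> ?S') = 2 ^ ((n - 2) div 2) * fact ((n - 2) div 2)"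
      using less.IH[of "n - 2" ?S'] n2 less.prems inv_on_remove[OF r a]
        card_remove_pair[OF less.prems(1) r a] by simp
    let ?F = "\<lambda>b. {\<sigma> \<in> CenS \<rho> S. \<sigma> a = b}"
    have inS: "\<sigma> a \<in> S" if "\<sigma> \<in> CenS \<rho> S" for \<sigma>
    proof -
      from that have "\<sigma> permutes S" by (simp add: CenS_def)
      then show ?thesis using a by (simp add: permutes_in_image)
    qed
    have split: "CenS \<rho> S = (\<Union>b\<in>S. ?F b)" using inS by blast
    have fin: "finite (?F b)" for b by (rule finite_subset[OF _ CenS_finite[OF less.prems(1)]]) auto
    have cF: "card (?F b) = card (CenS \<rho> ?S')" if b: "b \<in> S" for b
    proof -
      obtain t where t: "t \<in> CenS \<rho> S" "t a = b" using CenS_trans[OF r a b] by blast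
      have tp: "t permutes S" using t by (simp add: CenS_def)
      have "card (?F b) = card ((\<lambda>\<tau>. t \<circ> \<tau>) ` ?F a)" using CenS_fiber[OF r t] by simp
      also have "\<dots> = card (?F a)"
        by (rule card_image[OF inj_on_subset[OF inj_comp_left[OF permutes_inj[OF tp]] subset_UNIV]])
      also have "\<dots> = card (CenS \<rho> ?S')" using CenS_fix[OF r a] by simp
      finally show ?thesis .
    qed
    have "card (CenS \<rho> S) = (\<Sum>b\<in>S. card (?F b))"
      by (subst split, rule card_UN_disjoint) (use fin less.prems in auto)
    also have "\<dots> = n * card (CenS \<rho> ?S')" using cF less.prems(3) by simp
    finally have eq: "card (CenS \<rho> S) = n * (2 ^ ((n - 2) div 2) * fact ((n - 2) div 2))" using cS' by simp
    obtain h where h: "n = 2 * Suc h" using ev n2 by (metis dvd_def Suc_pred less_le_trans mult_0_right not_less_eq_eq nat_0_less_mult_iff numeral_2_eq_2 zero_less_Suc)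
    show ?thesis using eq unfolding h by (simp add: algebra_simps)
  qed
qed



definition SqS :: "('a \<Rightarrow> 'a) \<Rightarrow> 'a set \<Rightarrow> ('a \<Rightarrow> 'a) set" where
  "SqS \<rho> S = {\<sigma>. \<sigma> permutes S \<and> (\<forall>x\<in>S. \<sigma> (\<sigma> x) = \<rho> x)}"

fun sqn :: "nat \<Rightarrow> nat" where
  "sqn 0 = 1" | "sqn (Suc 0) = 0" | "sqn (Suc (Suc h)) = (2 * h + 2) * sqn h"

lemma SqS_notpair:
  assumes r: "inv_on \<rho> S" and a: "a \<in> S" and s: "\<sigma> \<in> SqS \<rho> S"
  shows "\<sigma> a \<in> S - {a, \<rho> a}"
proof -
  have p: "\<sigma> permutes S" and q: "\<And>x. x \<in> S \<Longrightarrow> \<sigma> (\<sigma> x) = \<rho> x" using s by (auto simp: SqS_def)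
  have inS: "\<sigma> a \<in> S" using p a by (simp add: permutes_in_image)
  have "\<sigma> a \<noteq> a"
  proof
    assume "\<sigma> a = a" then have "\<sigma> (\<sigma> a) = a" by simp
    then show False using q[OF a] inv_onD(3)[OF r a] by simp
  qed
  moreover have "\<sigma> a \<noteq> \<rho> a"
  proof
    assume e: "\<sigma> a = \<rho> a"
    then have "\<sigma> (\<rho> a) = \<rho> a" using q[OF a] by simp
    then have "\<sigma> (\<rho> a) = \<sigma> a" using e by simp
    then have "\<rho> a = a" using permutes_inj[OF p] by (simp add: inj_eq)
    then show False using inv_onD(3)[OF r a] by simp
  qed
  ultimately show ?thesis using inS by simp
qed

lemma SqS_fiber:
  assumes r: "inv_on \<rho> S" and a: "a \<in> S" and b: "b \<in> S - {a, \<rho> a}"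
  defines "c \<equiv> transpose a (\<rho> b) \<circ> transpose a (\<rho> a) \<circ> transpose a b"
  defines "Q \<equiv> {a, \<rho> a, b, \<rho> b}"
  shows "{\<sigma> \<in> SqS \<rho> S. \<sigma> a = b} = (\<lambda>\<tau>. c \<circ> \<tau>) ` SqS \<rho> (S - Q)"
proof -
  have ra: "\<rho> a \<in> S" "\<rho> (\<rho> a) = a" "\<rho> a \<noteq> a" using inv_onD[OF r a] by auto
  have bS: "b \<in> S" "b \<noteq> a" "b \<noteq> \<rho> a" using b by auto
  have rb: "\<rho> b \<in> S" "\<rho> (\<rho> b) = b" "\<rho> b \<noteq> b" using inv_onD[OF r bS(1)] by auto
  have d1: "\<rho> b \<noteq> a" using bS rb ra by metis
  have d2: "\<rho> b \<noteq> \<rho> a" using bS inv_on_inj[OF r bS(1) a] by blast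
  define c' where "c' = transpose a b \<circ> transpose a (\<rho> a) \<circ> transpose a (\<rho> b)"
  have cv: "c a = b" "c b = \<rho> a" "c (\<rho> a) = \<rho> b" "c (\<rho> b) = a"
    using bS ra rb d1 d2 by (auto simp: c_def transpose_def)
  have cv2: "c x = x" if "x \<notin> Q" for x using that by (auto simp: c_def Q_def transpose_def)
  have c'v: "c' b = a" "c' (\<rho> a) = b" "c' (\<rho> b) = \<rho> a" "c' a = \<rho> b"
    using bS ra rb d1 d2 by (auto simp: c'_def transpose_def)
  have c'v2: "c' x = x" if "x \<notin> Q" for x using that by (auto simp: c'_def Q_def transpose_def)
  have cc': "c (c' x) = x" for x
    unfolding c_def c'_def by simp
  have QS: "Q \<subseteq> S" using a ra bS rb by (auto simp: Q_def)
  have cp: "c permutes S" unfolding c_def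
    by (intro permutes_compose permutes_swap_id a ra(1) rb(1) bS(1))
  have c'p: "c' permutes S" unfolding c'_def
    by (intro permutes_compose permutes_swap_id a ra(1) rb(1) bS(1))
  have rQ: "\<rho> x \<notin> Q" if "x \<in> S" "x \<notin> Q" for x
  proof
    assume "\<rho> x \<in> Q"
    then consider "\<rho> x = a" | "\<rho> x = \<rho> a" | "\<rho> x = b" | "\<rho> x = \<rho> b" by (auto simp: Q_def)
    then show False
    proof cases
      case 1 then have "\<rho> (\<rho> x) = \<rho> a" by simp
      then show False using that inv_onD(2)[OF r that(1)] by (simp add: Q_def)
    next
      case 2 then show False using that inv_on_inj[OF r that(1) a] by (simp add: Q_def)
    next
      case 3 then have "\<rho> (\<rho> x) = \<rho> b" by simp
      then show False using that inv_onD(2)[OF r that(1)] by (simp add: Q_def)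
    next
      case 4 then show False using that inv_on_inj[OF r that(1) bS(1)] by (simp add: Q_def)
    qed
  qed
  show ?thesis
  proof (rule Set.set_eqI, rule iffI)
    fix \<sigma> assume "\<sigma> \<in> {\<sigma> \<in> SqS \<rho> S. \<sigma> a = b}"
    then have p: "\<sigma> permutes S" and q: "\<And>x. x \<in> S \<Longrightarrow> \<sigma> (\<sigma> x) = \<rho> x" and sa: "\<sigma> a = b"
      by (auto simp: SqS_def)
    have sb: "\<sigma> b = \<rho> a" using q[OF a] sa by simp
    have sra: "\<sigma> (\<rho> a) = \<rho> b" using q[OF bS(1)] sb by simp
    have srb: "\<sigma> (\<rho> b) = a" using q[OF ra(1)] sra ra by simp
    define \<tau> where "\<tau> = c' \<circ> \<sigma>"
    have tp: "\<tau> permutes S" unfolding \<tau>_def by (rule permutes_compose[OF p c'p])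
    have tf: "\<forall>x\<in>Q. \<tau> x = x" using sa sb sra srb c'v by (auto simp: \<tau>_def Q_def)
    have tp2: "\<tau> permutes (S - Q)" using permutes_fix_remove[OF tp tf] .
    have sQ: "\<sigma> x \<notin> Q" if "x \<in> S" "x \<notin> Q" for x
    proof
      assume "\<sigma> x \<in> Q"
      then consider "\<sigma> x = \<sigma> (\<rho> b)" | "\<sigma> x = \<sigma> b" | "\<sigma> x = \<sigma> a" | "\<sigma> x = \<sigma> (\<rho> a)"
        using sa sb sra srb by (auto simp: Q_def)
      then have "x \<in> Q" using permutes_inj[OF p] by (cases) (auto simp: Q_def inj_eq)
      then show False using that by simp
    qed
    have "\<forall>x\<in>S - Q. \<tau> (\<tau> x) = \<rho> x"
    proof
      fix x assume x: "x \<in> S - Q"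
      have "\<tau> x = \<sigma> x" using sQ x c'v2 by (simp add: \<tau>_def)
      then have "\<tau> (\<tau> x) = c' (\<sigma> (\<sigma> x))" by (simp add: \<tau>_def)
      also have "\<dots> = c' (\<rho> x)" using q x by simp
      also have "\<dots> = \<rho> x" using c'v2 rQ x by simp
      finally show "\<tau> (\<tau> x) = \<rho> x" .
    qed
    then have "\<tau> \<in> SqS \<rho> (S - Q)" using tp2 by (simp add: SqS_def)
    moreover have "\<sigma> = c \<circ> \<tau>" unfolding \<tau>_def fun_eq_iff using cc' by simp
    ultimately show "\<sigma> \<in> (\<lambda>\<tau>. c \<circ> \<tau>) ` SqS \<rho> (S - Q)" by blast
  next
    fix \<sigma> assume "\<sigma> \<in> (\<lambda>\<tau>. c \<circ> \<tau>) ` SqS \<rho> (S - Q)"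
    then obtain \<tau> where t: "\<tau> \<in> SqS \<rho> (S - Q)" and st: "\<sigma> = c \<circ> \<tau>" by blast
    have tp: "\<tau> permutes (S - Q)" and q: "\<And>x. x \<in> S - Q \<Longrightarrow> \<tau> (\<tau> x) = \<rho> x"
      using t by (auto simp: SqS_def)
    have tf: "\<tau> x = x" if "x \<in> Q" for x using tp that by (simp add: permutes_not_in)
    have tpS: "\<tau> permutes S" using tp permutes_subset by blast
    have "c \<circ> \<tau> permutes S" by (rule permutes_compose[OF tpS cp])
    moreover have "\<forall>x\<in>S. (c \<circ> \<tau>) ((c \<circ> \<tau>) x) = \<rho> x"
    proof
      fix x assume x: "x \<in> S"
      show "(c \<circ> \<tau>) ((c \<circ> \<tau>) x) = \<rho> x"
      proof (cases "x \<in> Q")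
        case True
        have "c x \<in> Q" using True cv by (auto simp: Q_def)
        then have "(c \<circ> \<tau>) ((c \<circ> \<tau>) x) = c (c x)" using tf True by simp
        also have "\<dots> = \<rho> x" using True cv ra rb by (auto simp: Q_def)
        finally show ?thesis .
      next
        case False
        then have tx: "\<tau> x \<in> S - Q" using x permutes_in_image[OF tp] by simp
        then have "\<tau> (\<tau> x) \<in> S - Q" using permutes_in_image[OF tp] by simp
        then show ?thesis using cv2 tx q[of x] x False by simp
      qed
    qed
    moreover have "(c \<circ> \<tau>) a = b" using tf cv by (simp add: Q_def)
    ultimately show "\<sigma> \<in> {\<sigma> \<in> SqS \<rho> S. \<sigma> a = b}" using st by (simp add: SqS_def)
  qed
qed

lemma SqS_finite: "finite S \<Longrightarrow> finite (SqS \<rho> S)"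
  by (rule finite_subset[OF _ finite_permutations]) (auto simp: SqS_def)

lemma card_SqS_aux:
  "finite S \<Longrightarrow> inv_on \<rho> S \<Longrightarrow> card S = n \<Longrightarrow> card (SqS \<rho> S) = sqn (n div 2)"
proof (induction n arbitrary: S rule: less_induct)
  case (less n)
  show ?case
  proof (cases "S = {}")
    case True
    then have "SqS \<rho> S = {id}" by (auto simp: SqS_def)
    then show ?thesis using True less.prems by simp
  next
    case False
    then obtain a where a: "a \<in> S" by blast
    have r: "inv_on \<rho> S" using less.prems by simp
    have "\<rho> a \<in> S" "\<rho> a \<noteq> a" using inv_onD[OF r a] by auto
    then have "card {a, \<rho> a} = 2" by simp
    moreover have "card {a, \<rho> a} \<le> card S" using less.prems(1) a \<open>\<rho> a \<in> S\<close> by (intro card_mono) auto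
    ultimately have n2: "n \<ge> 2" using less.prems(3) by simp
    have ev: "even n" using inv_on_even less.prems by blast
    let ?S1 = "S - {a, \<rho> a}"
    have r1: "inv_on \<rho> ?S1" using inv_on_remove[OF r a] .
    have c1: "card ?S1 = n - 2" using card_remove_pair[OF less.prems(1) r a] less.prems(3) by simp
    let ?F = "\<lambda>b. {\<sigma> \<in> SqS \<rho> S. \<sigma> a = b}"
    have split: "SqS \<rho> S = (\<Union>b\<in>?S1. ?F b)" using SqS_notpair[OF r a] by blast
    have fin: "finite (?F b)" for b by (rule finite_subset[OF _ SqS_finite[OF less.prems(1)]]) auto
    have cF: "card (?F b) = sqn ((n - 4) div 2)" if b: "b \<in> ?S1" for b
    proof -
      let ?c = "transpose a (\<rho> b) \<circ> transpose a (\<rho> a) \<circ> transpose a b"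
      have eqQ: "S - {a, \<rho> a, b, \<rho> b} = ?S1 - {b, \<rho> b}" by auto
      have rQ: "inv_on \<rho> (S - {a, \<rho> a, b, \<rho> b})" using inv_on_remove[OF r1 b] eqQ by simp
      have cQ: "card (S - {a, \<rho> a, b, \<rho> b}) = n - 4"
        using card_remove_pair[OF _ r1 b] c1 eqQ less.prems(1) by simp
      have cp: "?c permutes S" using a b \<open>\<rho> a \<in> S\<close> inv_onD(1)[OF r, of b]
        by (intro permutes_compose permutes_swap_id) auto
      have "card (?F b) = card ((\<lambda>\<tau>. ?c \<circ> \<tau>) ` SqS \<rho> (S - {a, \<rho> a, b, \<rho> b}))"
        using SqS_fiber[OF r a b] by simp
      also have "\<dots> = card (SqS \<rho> (S - {a, \<rho> a, b, \<rho> b}))"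
        by (rule card_image[OF inj_on_subset[OF inj_comp_left[OF permutes_inj[OF cp]] subset_UNIV]])
      also have "\<dots> = sqn ((n - 4) div 2)"
        using less.IH[of "n - 4" "S - {a, \<rho> a, b, \<rho> b}"] less.prems rQ cQ n2 by simp
      finally show ?thesis .
    qed
    have "card (SqS \<rho> S) = (\<Sum>b\<in>?S1. card (?F b))"
      by (subst split, rule card_UN_disjoint) (use fin less.prems in auto)
    also have "\<dots> = (n - 2) * sqn ((n - 4) div 2)" using cF c1 by simp
    finally have eq: "card (SqS \<rho> S) = (n - 2) * sqn ((n - 4) div 2)" .
    obtain h where h: "n = 2 * Suc h" using ev n2 by (metis dvd_def Suc_pred less_le_trans mult_0_right not_less_eq_eq nat_0_less_mult_iff numeral_2_eq_2 zero_less_Suc)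
    show ?thesis
    proof (cases h)
      case 0 then show ?thesis using eq h by simp
    next
      case (Suc h')
      then have "n div 2 = Suc (Suc h')" "(n - 4) div 2 = h'" "n - 2 = 2 * h' + 2" using h by auto
      then show ?thesis using eq by simp
    qed
  qed
qed



definition R :: "nat \<Rightarrow> nat \<Rightarrow> nat" where
  "R k x = (if x \<in> {1..k} then k + 1 - x else x)"

lemma R_R [simp]: "R k (R k x) = x"
  by (auto simp: R_def)

lemma R_in: "x \<in> {1..k} \<Longrightarrow> R k x \<in> {1..k}"
  by (auto simp: R_def)

lemma R_fix_iff: "x \<in> {1..k} \<Longrightarrow> R k x = x \<longleftrightarrow> 2 * x = k + 1"
  by (auto simp: R_def)

lemma inv_on_R_even:
  assumes ev: "even k" shows "inv_on (R k) {1..k}"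
  unfolding inv_on_def
proof (intro ballI conjI)
  fix x assume x: "x \<in> {1..k}"
  show "R k x \<in> {1..k}" using R_in[OF x] .
  show "R k (R k x) = x" by simp
  show "R k x \<noteq> x"
  proof
    assume "R k x = x" then have "2 * x = k + 1" using R_fix_iff[OF x] by simp
    then show False using ev by presburger
  qed
qed

lemma inv_on_R_odd:
  assumes od: "odd k" shows "inv_on (R k) ({1..k} - {(k + 1) div 2})"
  unfolding inv_on_def
proof (intro ballI conjI)
  obtain m where m: "k = 2 * m + 1" using od by (auto elim!: oddE)
  fix x assume x: "x \<in> {1..k} - {(k + 1) div 2}"
  then have x1: "1 \<le> x" "x \<le> 2 * m + 1" "x \<noteq> m + 1" using m by auto
  have Rx: "R k x = 2 * m + 2 - x" using x1 m by (simp add: R_def)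
  show "R k x \<in> {1..k} - {(k + 1) div 2}" using Rx x1 m by auto
  show "R k (R k x) = x" by simp
  show "R k x \<noteq> x" using Rx x1 by simp
qed

lemma CenS_reduce:
  assumes c: "c \<in> S" "\<rho> c = c" and r: "inv_on \<rho> (S - {c})"
  shows "CenS \<rho> S = CenS \<rho> (S - {c})"
proof (rule Set.set_eqI, rule iffI)
  fix \<sigma> assume "\<sigma> \<in> CenS \<rho> S"
  then have p: "\<sigma> permutes S" and q: "\<forall>x\<in>S. \<sigma> (\<rho> x) = \<rho> (\<sigma> x)" by (auto simp: CenS_def)
  have "\<sigma> c = c"
  proof (rule ccontr)
    assume ne: "\<sigma> c \<noteq> c"
    have "\<sigma> c \<in> S" using p c by (simp add: permutes_in_image)
    then have "\<rho> (\<sigma> c) \<noteq> \<sigma> c" using inv_onD(3)[OF r] ne by blast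
    moreover have "\<rho> (\<sigma> c) = \<sigma> c" using q c by metis
    ultimately show False by simp
  qed
  then have "\<sigma> permutes (S - {c})" using permutes_fix_remove[OF p, of "{c}"] by simp
  then show "\<sigma> \<in> CenS \<rho> (S - {c})" using q by (simp add: CenS_def)
next
  fix \<sigma> assume "\<sigma> \<in> CenS \<rho> (S - {c})"
  then have p: "\<sigma> permutes (S - {c})" and q: "\<forall>x\<in>S - {c}. \<sigma> (\<rho> x) = \<rho> (\<sigma> x)" by (auto simp: CenS_def)
  have sc: "\<sigma> c = c" using p by (simp add: permutes_not_in)
  have "\<sigma> permutes S" using p permutes_subset by blast
  moreover have "\<forall>x\<in>S. \<sigma> (\<rho> x) = \<rho> (\<sigma> x)" using q sc c by auto
  ultimately show "\<sigma> \<in> CenS \<rho> S" by (simp add: CenS_def)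
qed

lemma SqS_reduce:
  assumes c: "c \<in> S" "\<rho> c = c" and r: "inv_on \<rho> (S - {c})"
  shows "SqS \<rho> S = SqS \<rho> (S - {c})"
proof (rule Set.set_eqI, rule iffI)
  fix \<sigma> assume "\<sigma> \<in> SqS \<rho> S"
  then have p: "\<sigma> permutes S" and q: "\<forall>x\<in>S. \<sigma> (\<sigma> x) = \<rho> x" by (auto simp: SqS_def)
  have "\<sigma> c = c"
  proof (rule ccontr)
    assume ne: "\<sigma> c \<noteq> c"
    have dS: "\<sigma> c \<in> S" using p c by (simp add: permutes_in_image)
    have "\<sigma> (\<sigma> c) = c" using q c by simp
    then have "\<sigma> (\<sigma> (\<sigma> c)) = \<sigma> c" by simp
    moreover have "\<sigma> (\<sigma> (\<sigma> c)) = \<rho> (\<sigma> c)" using q dS by simp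
    moreover have "\<rho> (\<sigma> c) \<noteq> \<sigma> c" using inv_onD(3)[OF r] ne dS by blast
    ultimately show False by simp
  qed
  then have "\<sigma> permutes (S - {c})" using permutes_fix_remove[OF p, of "{c}"] by simp
  then show "\<sigma> \<in> SqS \<rho> (S - {c})" using q by (simp add: SqS_def)
next
  fix \<sigma> assume "\<sigma> \<in> SqS \<rho> (S - {c})"
  then have p: "\<sigma> permutes (S - {c})" and q: "\<forall>x\<in>S - {c}. \<sigma> (\<sigma> x) = \<rho> x" by (auto simp: SqS_def)
  have sc: "\<sigma> c = c" using p by (simp add: permutes_not_in)
  have "\<sigma> permutes S" using p permutes_subset by blast
  moreover have "\<forall>x\<in>S. \<sigma> (\<sigma> x) = \<rho> x" using q sc c by auto
  ultimately show "\<sigma> \<in> SqS \<rho> S" by (simp add: SqS_def)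
qed

lemma card_CenS_R: "card (CenS (R k) {1..k}) = 2 ^ (k div 2) * fact (k div 2)"
proof (cases "even k")
  case True
  then show ?thesis using card_CenS_aux[OF _ inv_on_R_even[OF True]] by simp
next
  case False
  let ?c = "(k + 1) div 2"
  obtain m where m: "k = 2 * m + 1" using False by (auto elim!: oddE)
  have c: "?c \<in> {1..k}" "R k ?c = ?c" using m by (auto simp: R_def)
  have "card ({1..k} - {?c}) = k - 1" using c by simp
  moreover have "(k - 1) div 2 = k div 2" using m by simp
  ultimately show ?thesis
    using CenS_reduce[OF c inv_on_R_odd[OF False]] card_CenS_aux[OF _ inv_on_R_odd[OF False]] by simp
qed

lemma card_SqS_R: "card (SqS (R k) {1..k}) = sqn (k div 2)"
proof (cases "even k")
  case True
  then show ?thesis using card_SqS_aux[OF _ inv_on_R_even[OF True]] by simp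
next
  case False
  let ?c = "(k + 1) div 2"
  obtain m where m: "k = 2 * m + 1" using False by (auto elim!: oddE)
  have c: "?c \<in> {1..k}" "R k ?c = ?c" using m by (auto simp: R_def)
  have "card ({1..k} - {?c}) = k - 1" using c by simp
  moreover have "(k - 1) div 2 = k div 2" using m by simp
  ultimately show ?thesis
    using SqS_reduce[OF c inv_on_R_odd[OF False]] card_SqS_aux[OF _ inv_on_R_odd[OF False]] by simp
qed

lemma card_InvS_nat: "card (InvS {1..k::nat}) = invn k"
  using card_InvS_aux[of "{1..k}" k] by simp



fun dd :: "nat \<Rightarrow> nat" where
  "dd 0 = 1" | "dd (Suc j) = (2 * j + 1) * dd j"

definition T :: "nat \<Rightarrow> nat \<Rightarrow> nat" where
  "T n j = (n choose (2 * j)) * dd j"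

lemma fact_2j: "fact (2 * j) = dd j * fact j * 2 ^ j"
proof (induction j)
  case 0 then show ?case by simp
next
  case (Suc j)
  have "fact (2 * Suc j) = (2 * j + 2) * ((2 * j + 1) * fact (2 * j))"
    by (simp add: fact_Suc algebra_simps)
  also have "\<dots> = dd (Suc j) * fact (Suc j) * 2 ^ Suc j"
    using Suc by (simp add: fact_Suc algebra_simps)
  finally show ?case .
qed

lemma T_term: "2 * j \<le> n \<Longrightarrow> fact n div (fact j * fact (n - 2 * j) * 2 ^ j) = T n j"
proof -
  assume h: "2 * j \<le> n"
  have "fact n = fact (2 * j) * fact (n - 2 * j) * (n choose (2 * j))"
    using binomial_fact_lemma[OF h] by simp
  also have "\<dots> = T n j * (fact j * fact (n - 2 * j) * 2 ^ j)"
    unfolding T_def fact_2j by (simp add: algebra_simps)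
  finally have "fact n = T n j * (fact j * fact (n - 2 * j) * 2 ^ j)" .
  moreover have "(fact j * fact (n - 2 * j) * 2 ^ j :: nat) > 0" by simp
  ultimately show ?thesis by simp
qed

lemma T_zero: "n < 2 * j \<Longrightarrow> T n j = 0"
  by (simp add: T_def)

lemma T_0 [simp]: "T n 0 = 1"
  by (simp add: T_def)

lemma T_rec: "T (Suc (Suc n)) (Suc j) = T (Suc n) (Suc j) + Suc n * T n j"
proof -
  have b: "(Suc (Suc n) choose Suc (Suc (2 * j))) = (Suc n choose Suc (2 * j)) + (Suc n choose Suc (Suc (2 * j)))"
    by simp
  have s: "(Suc n choose Suc (2 * j)) * (2 * j + 1) = Suc n * (n choose (2 * j))"
    using Suc_times_binomial[of "2 * j" n] by (simp add: algebra_simps)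
  have "T (Suc (Suc n)) (Suc j) = ((Suc n choose Suc (2 * j)) + (Suc n choose Suc (Suc (2 * j)))) * ((2 * j + 1) * dd j)"
    unfolding T_def using b by simp
  also have "\<dots> = (Suc n choose Suc (Suc (2 * j))) * ((2 * j + 1) * dd j) + ((Suc n choose Suc (2 * j)) * (2 * j + 1)) * dd j"
    by (simp add: algebra_simps)
  also have "\<dots> = T (Suc n) (Suc j) + Suc n * T n j"
    unfolding s T_def by (simp add: algebra_simps)
  finally show ?thesis .
qed

definition G :: "nat \<Rightarrow> nat" where "G n = (\<Sum>j\<le>n. T n j)"

lemma G_ext: "n \<le> N \<Longrightarrow> (\<Sum>j\<le>N. T n j) = G n"
proof (induction N)
  case 0 then show ?case by (simp add: G_def)
next
  case (Suc N)
  show ?case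
  proof (cases "n \<le> N")
    case True
    then have "T n (Suc N) = 0" by (intro T_zero) simp
    then show ?thesis using Suc True by simp
  next
    case False then have "n = Suc N" using Suc by simp
    then show ?thesis by (simp add: G_def)
  qed
qed

lemma G_rec: "G (Suc (Suc n)) = G (Suc n) + Suc n * G n"
proof -
  have "G (Suc (Suc n)) = 1 + (\<Sum>j\<le>Suc n. T (Suc (Suc n)) (Suc j))"
    unfolding G_def by (subst sum.atMost_Suc_shift) simp
  also have "\<dots> = 1 + (\<Sum>j\<le>Suc n. T (Suc n) (Suc j)) + Suc n * (\<Sum>j\<le>Suc n. T n j)"
    by (simp add: T_rec sum.distrib sum_distrib_left distrib_left)
  also have "1 + (\<Sum>j\<le>Suc n. T (Suc n) (Suc j)) = (\<Sum>j\<le>Suc (Suc n). T (Suc n) j)"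
    by (subst sum.atMost_Suc_shift) simp
  also have "\<dots> = G (Suc n)" by (rule G_ext) simp
  also have "(\<Sum>j\<le>Suc n. T n j) = G n" by (rule G_ext) simp
  finally show ?thesis .
qed

lemma invn_G: "invn n = G n"
proof (induction n rule: invn.induct)
  case 1 then show ?case by (simp add: G_def)
next
  case 2 then show ?case by (simp add: G_def T_def)
next
  case (3 n) then show ?case by (simp add: G_rec)
qed

lemma num_involutions_invn: "num_involutions n = invn n"
proof -
  have "num_involutions n = (\<Sum>j\<le>n div 2. T n j)"
    unfolding num_involutions_def
    by (rule sum.cong) (auto intro: T_term)
  also have "\<dots> = (\<Sum>j\<le>n. T n j)"
  proof (rule sum.mono_neutral_left)
    show "\<forall>i\<in>{..n} - {..n div 2}. T n i = 0" by (auto intro!: T_zero)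
  qed auto
  finally show ?thesis by (simp add: invn_G G_def)
qed

lemma sqn_odd: "sqn (2 * m + 1) = 0"
  by (induction m) (auto simp: numeral_2_eq_2)

lemma sqn_even: "sqn (2 * m) * fact m = fact (2 * m)"
proof (induction m)
  case 0 then show ?case by simp
next
  case (Suc m)
  have e: "2 * Suc m = Suc (Suc (2 * m))" by simp
  have a: "sqn (2 * Suc m) = (4 * m + 2) * sqn (2 * m)" unfolding e by simp
  have b: "fact (Suc m) = (m + 1) * (fact m :: nat)" by (simp add: fact_Suc)
  have c: "fact (2 * Suc m) = (2 * m + 2) * ((2 * m + 1) * (fact (2 * m) :: nat))" unfolding e by (simp add: fact_Suc)
  have "sqn (2 * Suc m) * fact (Suc m) = ((4 * m + 2) * (m + 1)) * (sqn (2 * m) * fact m)"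
    unfolding a b by (simp only: mult_ac)
  also have "\<dots> = ((4 * m + 2) * (m + 1)) * fact (2 * m)" using Suc by simp
  also have "\<dots> = fact (2 * Suc m)" unfolding c by (simp add: algebra_simps)
  finally show ?case .
qed

lemma sqn_div: "fact (2 * Suc m - 1) div fact (Suc m - 1) * 2 = sqn (2 * Suc m)"
proof -
  have e1: "2 * Suc m - 1 = Suc (2 * m)" "Suc m - 1 = m" by simp_all
  have "fact (Suc (2 * m)) = (2 * m + 1) * (fact (2 * m) :: nat)" by (simp add: fact_Suc)
  also have "\<dots> = ((2 * m + 1) * sqn (2 * m)) * fact m" by (subst sqn_even[of m, symmetric]) (simp only: mult_ac)
  finally have f: "fact (Suc (2 * m)) = ((2 * m + 1) * sqn (2 * m)) * (fact m :: nat)" .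
  have d: "fact (Suc (2 * m)) div fact m = (2 * m + 1) * sqn (2 * m)"
    unfolding f by (rule nonzero_mult_div_cancel_right) simp
  have "sqn (2 * Suc m) = (4 * m + 2) * sqn (2 * m)"
  proof -
    have "2 * Suc m = Suc (Suc (2 * m))" by simp
    then show ?thesis by simp
  qed
  then show ?thesis unfolding e1 d by simp
qed



definition mu :: "nat \<Rightarrow> nat set \<Rightarrow> nat set" where "mu k X = (\<lambda>x. k - x) ` X"
definition rp :: "nat \<Rightarrow> bool \<Rightarrow> nat \<Rightarrow> nat" where "rp k a = (if a then R k else id)"
definition mup :: "nat \<Rightarrow> bool \<Rightarrow> nat set \<Rightarrow> nat set" where "mup k a X = (if a then mu k X else X)"

definition ee :: "nat \<Rightarrow> bool \<times> bool \<times> bool \<Rightarrow> bvpat \<Rightarrow> bvpat" where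
  "ee k t p = (case t of (s, a, b) \<Rightarrow> case p of (\<sigma>, X, Y) \<Rightarrow>
     (rp k b \<circ> (if s then invf \<sigma> else \<sigma>) \<circ> rp k a, mup k a (if s then Y else X), mup k b (if s then X else Y)))"

definition dmult :: "bool \<times> bool \<times> bool \<Rightarrow> bool \<times> bool \<times> bool \<Rightarrow> bool \<times> bool \<times> bool" where
  "dmult x y = (case x of (s, a, b) \<Rightarrow> case y of (s', a', b') \<Rightarrow>
     (s \<noteq> s', a \<noteq> (if s then b' else a'), b \<noteq> (if s then a' else b')))"

lemma mu_sub: "X \<subseteq> {0..k} \<Longrightarrow> mu k X \<subseteq> {0..k}"
  by (auto simp: mu_def)

lemma mu_mu: "X \<subseteq> {0..k} \<Longrightarrow> mu k (mu k X) = X"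
proof -
  assume X: "X \<subseteq> {0..k}"
  have "mu k (mu k X) = (\<lambda>x. k - (k - x)) ` X" by (simp add: mu_def image_image)
  also have "\<dots> = (\<lambda>x. x) ` X" by (rule image_cong) (use X in auto)
  finally show ?thesis by simp
qed

lemma R_permutes: "R k permutes {1..k}"
  unfolding permutes_def
proof (intro conjI allI impI)
  fix x assume "x \<notin> {1..k}" then show "R k x = x" unfolding R_def by (simp only: if_False)
next
  fix y show "\<exists>!x. R k x = y"
  proof (rule ex1I[of _ "R k y"])
    show "R k (R k y) = y" by simp
    fix x assume "R k x = y" then show "x = R k y" by (metis R_R)
  qed
qed

lemma R_comp_R: "R k \<circ> R k = id" by (simp add: fun_eq_iff)
lemma R_comp_R2: "R k \<circ> (R k \<circ> f) = f" by (simp add: fun_eq_iff)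
lemma bij_R: "bij (R k)" using permutes_bij[OF R_permutes] .
lemma inv_R: "invf (R k) = R k" by (rule inv_unique_comp) (simp_all add: R_comp_R)

lemma rp_permutes: "rp k a permutes {1..k}"
  by (cases a) (simp_all only: rp_def if_True if_False R_permutes permutes_id)

abbreviation E :: "nat \<Rightarrow> bvpat set" where "E k \<equiv> bvpats k"

lemma ee_in: assumes "p \<in> E k" shows "ee k t p \<in> E k"
proof -
  obtain \<sigma> X Y where p: "p = (\<sigma>, X, Y)" by (cases p) auto
  obtain s a b where t: "t = (s, a, b)" by (cases t) auto
  have h: "\<sigma> permutes {1..k}" "X \<subseteq> {0..k}" "Y \<subseteq> {0..k}" using assms p by (auto simp: bvpats_def)
  have "(if s then invf \<sigma> else \<sigma>) permutes {1..k}" using h permutes_inv by auto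
  then have "rp k b \<circ> (if s then invf \<sigma> else \<sigma>) \<circ> rp k a permutes {1..k}"
    by (intro permutes_compose rp_permutes)
  moreover have "mup k a (if s then Y else X) \<subseteq> {0..k}" "mup k b (if s then X else Y) \<subseteq> {0..k}"
    using h mu_sub by (auto simp: mup_def)
  ultimately show ?thesis by (simp add: ee_def p t bvpats_def)
qed

lemma ee_one: "ee k (False, False, False) p = p"
  by (cases p) (simp add: ee_def rp_def mup_def)

lemma ee_comp:
  assumes "p \<in> E k"
  shows "ee k x (ee k y p) = ee k (dmult x y) p"
proof -
  obtain \<sigma> X Y where p: "p = (\<sigma>, X, Y)" by (cases p) auto
  have h: "\<sigma> permutes {1..k}" "X \<subseteq> {0..k}" "Y \<subseteq> {0..k}" using assms p by (auto simp: bvpats_def)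
  have b: "bij \<sigma>" using permutes_bij[OF h(1)] .
  have ii: "invf (invf \<sigma>) = \<sigma>" using inv_inv_eq[OF b] .
  have bi: "bij (invf \<sigma>)" using bij_imp_bij_inv[OF b] .
  note bR = bij_R[of k]
  have i1: "invf (R k \<circ> f) = invf f \<circ> R k" if "bij f" for f
    using o_inv_distrib[OF bR that] inv_R by simp
  have i2: "invf (f \<circ> R k) = R k \<circ> invf f" if "bij f" for f
    using o_inv_distrib[OF that bR] inv_R by simp
  have i3: "invf (R k \<circ> (f \<circ> R k)) = R k \<circ> (invf f \<circ> R k)" if "bij f" for f
    using i1[of "f \<circ> R k"] i2[OF that] bij_comp[OF bR that] by (simp add: o_assoc)
  have mm: "mu k (mu k X) = X" "mu k (mu k Y) = Y" using mu_mu h by auto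
  obtain s a b where x: "x = (s, a, b)" by (cases x) auto
  obtain s' a' b' where y: "y = (s', a', b')" by (cases y) auto
  show ?thesis unfolding p x y
    by (cases s; cases s'; cases a; cases b; cases a'; cases b')
      (simp_all add: ee_def dmult_def rp_def mup_def o_assoc[symmetric] R_comp_R R_comp_R2 i1 i2 i3 b bi ii mm inv_R)
qed



definition D :: "(bool \<times> bool \<times> bool) monoid" where
  "D = \<lparr>carrier = UNIV, mult = dmult, one = (False, False, False)\<rparr>"

definition dinv :: "bool \<times> bool \<times> bool \<Rightarrow> bool \<times> bool \<times> bool" where
  "dinv t = (case t of (s, a, b) \<Rightarrow> if s then (True, b, a) else (False, a, b))"

lemma dinv_l: "dmult (dinv t) t = (False, False, False)"
  by (cases t) (auto simp: dinv_def dmult_def)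

lemma dinv_r: "dmult t (dinv t) = (False, False, False)"
  by (cases t) (auto simp: dinv_def dmult_def)

lemma dmult_assoc: "dmult (dmult x y) z = dmult x (dmult y z)"
proof -
  obtain s1 a1 b1 s2 a2 b2 s3 a3 b3 where "x = (s1, a1, b1)" "y = (s2, a2, b2)" "z = (s3, a3, b3)"
    by (metis prod_cases3)
  then show ?thesis
    by (cases s1; cases s2; cases s3) (simp_all add: dmult_def; blast)+
qed

lemma dmult_one: "dmult (False, False, False) x = x"
  by (cases x) (simp add: dmult_def)

lemma group_D: "group D"
proof (rule groupI)
  fix x y z assume "x \<in> carrier D" "y \<in> carrier D" "z \<in> carrier D"
  show "x \<otimes>\<^bsub>D\<^esub> y \<otimes>\<^bsub>D\<^esub> z = x \<otimes>\<^bsub>D\<^esub> (y \<otimes>\<^bsub>D\<^esub> z)"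
    by (simp add: D_def dmult_assoc)
next
  fix x assume "x \<in> carrier D"
  show "\<one>\<^bsub>D\<^esub> \<otimes>\<^bsub>D\<^esub> x = x" by (simp add: D_def dmult_one)
  show "\<exists>y\<in>carrier D. y \<otimes>\<^bsub>D\<^esub> x = \<one>\<^bsub>D\<^esub>"
    by (rule bexI[of _ "dinv x"]) (simp_all add: D_def dinv_l)
qed (simp_all add: D_def)

definition phi :: "nat \<Rightarrow> bool \<times> bool \<times> bool \<Rightarrow> bvpat \<Rightarrow> bvpat" where
  "phi k t = restrict (ee k t) (E k)"

lemma ee_bij: "bij_betw (ee k t) (E k) (E k)"
proof (rule bij_betw_byWitness[where f' = "ee k (dinv t)"])
  show "\<forall>a\<in>E k. ee k (dinv t) (ee k t a) = a" using ee_comp dinv_l ee_one by simp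
  show "\<forall>a\<in>E k. ee k t (ee k (dinv t) a) = a" using ee_comp dinv_r ee_one by simp
  show "ee k t ` E k \<subseteq> E k" by (intro image_subsetI ee_in)
  show "ee k (dinv t) ` E k \<subseteq> E k" by (intro image_subsetI ee_in)
qed

lemma phi_Bij: "phi k t \<in> Bij (E k)"
proof -
  have "bij_betw (phi k t) (E k) (E k)"
    using ee_bij[of k t] by (subst bij_betw_cong[where g = "ee k t"]) (auto simp: phi_def)
  then show ?thesis by (simp add: Bij_def phi_def)
qed

lemma action: "group_action D (E k) (phi k)"
  unfolding group_action_def group_hom_def group_hom_axioms_def
proof (intro conjI)
  show "group D" by (rule group_D)
  show "group (BijGroup (E k))" by (rule group_BijGroup)
  show "phi k \<in> hom D (BijGroup (E k))"
    unfolding hom_def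
  proof (intro CollectI conjI)
    show "phi k \<in> carrier D \<rightarrow> carrier (BijGroup (E k))" using phi_Bij by (auto simp: BijGroup_def)
    show "\<forall>x\<in>carrier D. \<forall>y\<in>carrier D. phi k (x \<otimes>\<^bsub>D\<^esub> y) = phi k x \<otimes>\<^bsub>BijGroup (E k)\<^esub> phi k y"
    proof (intro ballI)
      fix x y
      have "phi k (dmult x y) = compose (E k) (phi k x) (phi k y)"
        unfolding phi_def compose_def
        by (rule ext) (simp add: ee_comp ee_in)
      then show "phi k (x \<otimes>\<^bsub>D\<^esub> y) = phi k x \<otimes>\<^bsub>BijGroup (E k)\<^esub> phi k y"
        using phi_Bij by (simp add: D_def BijGroup_def)
    qed
  qed
qed

lemma pat_i_ee: "pat_i k p = ee k (True, False, False) p"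
  by (cases p) (simp add: pat_i_def ee_def rp_def mup_def)

lemma pat_r_ee: "p \<in> E k \<Longrightarrow> pat_r k p = ee k (False, True, False) p"
proof -
  assume p: "p \<in> E k"
  obtain \<sigma> X Y where pp: "p = (\<sigma>, X, Y)" by (cases p) auto
  have h: "\<sigma> permutes {1..k}" using p pp by (simp add: bvpats_def)
  have "rev_perm k \<sigma> = \<sigma> \<circ> R k"
    by (rule ext) (simp add: rev_perm_def R_def permutes_not_in[OF h])
  then show ?thesis by (simp add: pp pat_r_def ee_def rp_def mup_def mu_def)
qed

lemma pat_c_ee: "p \<in> E k \<Longrightarrow> pat_c k p = ee k (False, False, True) p"
proof -
  assume p: "p \<in> E k"
  obtain \<sigma> X Y where pp: "p = (\<sigma>, X, Y)" by (cases p) auto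
  have h: "\<sigma> permutes {1..k}" using p pp by (simp add: bvpats_def)
  have "comp_perm k \<sigma> = R k \<circ> \<sigma>"
  proof (rule ext)
    fix x
    show "comp_perm k \<sigma> x = (R k \<circ> \<sigma>) x"
    proof (cases "x \<in> {1..k}")
      case True
      then have "\<sigma> x \<in> {1..k}" using permutes_in_image[OF h] by simp
      then show ?thesis using True by (simp add: comp_perm_def R_def)
    next
      case False
      moreover have "\<sigma> x = x" using False permutes_not_in[OF h] by simp
      ultimately show ?thesis by (auto simp: comp_perm_def R_def)
    qed
  qed
  then show ?thesis by (simp add: pp pat_c_def ee_def rp_def mup_def mu_def)
qed

lemma step_ee: "p \<in> E k \<Longrightarrow> (p, q) \<in> sym_step k \<Longrightarrow> \<exists>t. q = ee k t p"
  unfolding sym_step_def using pat_i_ee pat_r_ee pat_c_ee by blast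

lemma A: assumes p: "p \<in> E k" and "(p, q) \<in> (sym_step k)\<^sup>*" shows "\<exists>t. q = ee k t p"
  using assms(2)
proof (induction rule: rtrancl_induct)
  case base then show ?case using ee_one by metis
next
  case (step q r)
  then obtain t where t: "q = ee k t p" by blast
  have "q \<in> E k" using t ee_in p by simp
  then obtain t' where "r = ee k t' q" using step_ee step.hyps(2) by blast
  then have "r = ee k (dmult t' t) p" using t ee_comp p by simp
  then show ?case by blast
qed

lemma B: assumes p: "p \<in> E k" shows "(p, ee k t p) \<in> (sym_step k)\<^sup>*"
proof -
    obtain s a b where t: "t = (s, a, b)" by (cases t) auto
    have st: "(q, ee k (True, False, False) q) \<in> sym_step k" "(q, ee k (False, True, False) q) \<in> sym_step k"
      "(q, ee k (False, False, True) q) \<in> sym_step k" if "q \<in> E k" for q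
      unfolding sym_step_def using pat_i_ee[of k q] pat_r_ee[OF that] pat_c_ee[OF that] by simp_all
    have o1: "(q, ee k (s', False, False) q) \<in> (sym_step k)\<^sup>*" if "q \<in> E k" for q s'
      using st(1)[OF that] ee_one[of k q] by (cases s') auto
    have o2: "(q, ee k (False, a', False) q) \<in> (sym_step k)\<^sup>*" if "q \<in> E k" for q a'
      using st(2)[OF that] ee_one[of k q] by (cases a') auto
    have o3: "(q, ee k (False, False, b') q) \<in> (sym_step k)\<^sup>*" if "q \<in> E k" for q b'
      using st(3)[OF that] ee_one[of k q] by (cases b') auto
    define p1 where "p1 = ee k (s, False, False) p"
    define p2 where "p2 = ee k (False, a, False) p1"
    have e1: "p1 \<in> E k" "p2 \<in> E k" using ee_in p by (simp_all add: p1_def p2_def)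
    have "ee k (False, False, b) p2 = ee k t p"
      unfolding p2_def p1_def using ee_comp p e1 by (simp add: t dmult_def)
    moreover have "(p, p1) \<in> (sym_step k)\<^sup>*" unfolding p1_def using o1[OF p] .
    moreover have "(p1, p2) \<in> (sym_step k)\<^sup>*" unfolding p2_def using o2[OF e1(1)] .
    moreover have "(p2, ee k (False, False, b) p2) \<in> (sym_step k)\<^sup>*" using o3[OF e1(2)] .
    ultimately show ?thesis using rtrancl_trans by metis
qed

lemma orbit_eq:
  assumes p: "p \<in> E k"
  shows "sym_class k p = orbit D (phi k) p"
proof -
  have orb: "orbit D (phi k) p = {ee k t p | t. True}"
    using p by (auto simp: orbit_def D_def phi_def)
  have "sym_class k p = {ee k t p | t. True}"
  proof (rule Set.set_eqI, rule iffI)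
    fix q assume "q \<in> sym_class k p"
    then have "(p, q) \<in> (sym_step k)\<^sup>*" by (simp add: sym_class_def)
    then obtain t where "q = ee k t p" using A[OF p] by blast
    then show "q \<in> {ee k t p | t. True}" by blast
  next
    fix q assume "q \<in> {ee k t p | t. True}"
    then obtain t where "q = ee k t p" by blast
    then show "q \<in> sym_class k p" using B[OF p] by (simp add: sym_class_def)
  qed
  then show ?thesis using orb by simp
qed

lemma UNIV_D: "(UNIV :: (bool \<times> bool \<times> bool) set) =
  {(False,False,False),(False,False,True),(False,True,False),(False,True,True),
   (True,False,False),(True,False,True),(True,True,False),(True,True,True)}"
  by auto

lemma card_UNIV_D: "card (UNIV :: (bool \<times> bool \<times> bool) set) = 8"
  by (simp add: UNIV_D)

lemma burnside_k:
  "num_sym_classes k * 8 = (\<Sum>t\<in>UNIV. card {p \<in> E k. ee k t p = p})"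
proof -
  interpret group_action D "E k" "phi k" by (rule action)
  have fE: "finite (E k)"
  proof -
    have "E k \<subseteq> {\<sigma>. \<sigma> permutes {1..k}} \<times> (Pow {0..k} \<times> Pow {0..k})" by (auto simp: bvpats_def)
    moreover have "finite ({\<sigma>. \<sigma> permutes {1..k}} \<times> (Pow {0..k} \<times> Pow {0..k}))"
      by (simp add: finite_permutations)
    ultimately show ?thesis by (rule finite_subset)
  qed
  have "card (orbits D (E k) (phi k)) * order D = (\<Sum>g\<in>carrier D. card (invariants (E k) (phi k) g))"
    by (rule burnside) (simp_all add: D_def fE)
  moreover have "orbits D (E k) (phi k) = sym_class k ` E k"
  proof -
    have "orbits D (E k) (phi k) = orbit D (phi k) ` E k" unfolding orbits_def by (simp only: setcompr_eq_image Collect_mem_eq)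
    also have "\<dots> = sym_class k ` E k" by (rule image_cong) (simp_all add: orbit_eq)
    finally show ?thesis .
  qed
  moreover have "order D = 8" by (simp add: order_def D_def card_UNIV_D)
  moreover have "invariants (E k) (phi k) g = {p \<in> E k. ee k g p = p}" for g
    unfolding invariants_def phi_def by (intro Collect_cong) (auto simp: restrict_apply')
  ultimately show ?thesis by (simp add: num_sym_classes_def D_def)
qed



definition M :: "nat \<Rightarrow> nat set set" where "M k = {X. X \<subseteq> {0..k} \<and> mu k X = X}"

lemma card_M: "card (M k) = 2 ^ (k div 2 + 1)"
proof -
  let ?L = "{0..k div 2}"
  have "bij_betw (\<lambda>X. X \<inter> ?L) (M k) (Pow ?L)"
  proof (rule bij_betw_byWitness[where f' = "\<lambda>Y. Y \<union> mu k Y"])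
    show "\<forall>X\<in>M k. X \<inter> ?L \<union> mu k (X \<inter> ?L) = X"
    proof
      fix X assume X: "X \<in> M k"
      then have Xs: "X \<subseteq> {0..k}" and Xm: "mu k X = X" by (auto simp: M_def)
      have mem: "k - x \<in> X" if "x \<in> X" for x using that Xm by (auto simp: mu_def)
      show "X \<inter> ?L \<union> mu k (X \<inter> ?L) = X"
      proof (rule equalityI)
        show "X \<inter> ?L \<union> mu k (X \<inter> ?L) \<subseteq> X" using mem by (auto simp: mu_def)
        show "X \<subseteq> X \<inter> ?L \<union> mu k (X \<inter> ?L)"
        proof
          fix x assume x: "x \<in> X"
          show "x \<in> X \<inter> ?L \<union> mu k (X \<inter> ?L)"
          proof (cases "x \<le> k div 2")
            case True then show ?thesis using x by simp
          next
            case False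
            have xk: "x \<le> k" using x Xs by auto
            have "k - x \<in> X \<inter> ?L" using mem[OF x] False by auto
            moreover have "x = k - (k - x)" using xk by simp
            ultimately show ?thesis unfolding mu_def by blast
          qed
        qed
      qed
    qed
    show "\<forall>Y\<in>Pow ?L. (Y \<union> mu k Y) \<inter> ?L = Y"
    proof
      fix Y assume Y: "Y \<in> Pow ?L"
      have "mu k Y \<inter> ?L \<subseteq> Y"
      proof
        fix z assume z: "z \<in> mu k Y \<inter> ?L"
        then obtain y where y: "y \<in> Y" "z = k - y" by (auto simp: mu_def)
        have "y \<le> k div 2" using y Y by auto
        moreover have "k - y \<le> k div 2" using z y by auto
        ultimately have "k - y = y" by linarith
        then show "z \<in> Y" using y by simp
      qed
      then show "(Y \<union> mu k Y) \<inter> ?L = Y" using Y by auto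
    qed
    show "(\<lambda>X. X \<inter> ?L) ` M k \<subseteq> Pow ?L" by auto
    show "(\<lambda>Y. Y \<union> mu k Y) ` Pow ?L \<subseteq> M k"
    proof
      fix Z assume "Z \<in> (\<lambda>Y. Y \<union> mu k Y) ` Pow ?L"
      then obtain Y where Y: "Y \<subseteq> ?L" "Z = Y \<union> mu k Y" by auto
      have Ys: "Y \<subseteq> {0..k}" using Y by auto
      have "mu k Z = mu k Y \<union> Y" unfolding Y(2) using mu_mu[OF Ys] by (simp add: mu_def image_Un)
      moreover have "Z \<subseteq> {0..k}" using Y(2) Ys mu_sub[OF Ys] by auto
      ultimately show "Z \<in> M k" using Y(2) by (auto simp: M_def)
    qed
  qed
  then have "card (M k) = card (Pow ?L)" by (rule bij_betw_same_card)
  also have "\<dots> = 2 ^ (k div 2 + 1)" by (simp add: card_Pow)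
  finally show ?thesis .
qed

lemma card_diag: "card ((\<lambda>X. (X, X)) ` A) = card A"
  by (rule card_image) (auto simp: inj_on_def)

lemma card_anti: "card ((\<lambda>X. (X, mu k X)) ` A) = card A"
  by (rule card_image) (auto simp: inj_on_def)

lemma cen_iff:
  assumes p: "\<sigma> permutes {1..k}"
  shows "R k \<circ> \<sigma> \<circ> R k = \<sigma> \<longleftrightarrow> (\<forall>x\<in>{1..k}. \<sigma> (R k x) = R k (\<sigma> x))"
proof
  assume h: "R k \<circ> \<sigma> \<circ> R k = \<sigma>"
  show "\<forall>x\<in>{1..k}. \<sigma> (R k x) = R k (\<sigma> x)"
  proof
    fix x
    have "R k (\<sigma> (R k (R k x))) = \<sigma> (R k x)" using fun_cong[OF h, of "R k x"] by simp
    then have "R k (\<sigma> x) = \<sigma> (R k x)" by simp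
    then show "\<sigma> (R k x) = R k (\<sigma> x)" by simp
  qed
next
  assume h: "\<forall>x\<in>{1..k}. \<sigma> (R k x) = R k (\<sigma> x)"
  show "R k \<circ> \<sigma> \<circ> R k = \<sigma>"
  proof
    fix x
    show "(R k \<circ> \<sigma> \<circ> R k) x = \<sigma> x"
    proof (cases "x \<in> {1..k}")
      case True then show ?thesis using h by simp
    next
      case False
      then have "R k x = x" "\<sigma> x = x" using permutes_not_in[OF p] by (auto simp: R_def)
      then show ?thesis by simp
    qed
  qed
qed

lemma inv_iff:
  assumes p: "\<sigma> permutes {1..k}"
  shows "invf \<sigma> = \<sigma> \<longleftrightarrow> (\<forall>x\<in>{1..k}. \<sigma> (\<sigma> x) = x)"
proof
  assume h: "invf \<sigma> = \<sigma>"
  show "\<forall>x\<in>{1..k}. \<sigma> (\<sigma> x) = x"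
    using permutes_inverses(1)[OF p] h by metis
next
  assume h: "\<forall>x\<in>{1..k}. \<sigma> (\<sigma> x) = x"
  have h2: "\<sigma> (\<sigma> x) = x" for x
  proof (cases "x \<in> {1..k}")
    case True then show ?thesis using h by simp
  next
    case False then show ?thesis using permutes_not_in[OF p] by simp
  qed
  show "invf \<sigma> = \<sigma>"
  proof
    fix x show "invf \<sigma> x = \<sigma> x" using permutes_inv_eq[OF p] h2 by simp
  qed
qed

lemma sq_iff1:
  assumes p: "\<sigma> permutes {1..k}"
  shows "invf \<sigma> \<circ> R k = \<sigma> \<longleftrightarrow> (\<forall>x\<in>{1..k}. \<sigma> (\<sigma> x) = R k x)"
proof -
  have "invf \<sigma> \<circ> R k = \<sigma> \<longleftrightarrow> (\<forall>x. invf \<sigma> (R k x) = \<sigma> x)" by (simp add: fun_eq_iff)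
  also have "\<dots> \<longleftrightarrow> (\<forall>x. \<sigma> (\<sigma> x) = R k x)" using permutes_inv_eq[OF p] by metis
  also have "\<dots> \<longleftrightarrow> (\<forall>x\<in>{1..k}. \<sigma> (\<sigma> x) = R k x)"
  proof
    assume h: "\<forall>x\<in>{1..k}. \<sigma> (\<sigma> x) = R k x"
    show "\<forall>x. \<sigma> (\<sigma> x) = R k x"
    proof
      fix x show "\<sigma> (\<sigma> x) = R k x"
      proof (cases "x \<in> {1..k}")
        case True then show ?thesis using h by simp
      next
        case False
        then have "\<sigma> x = x" "R k x = x" using permutes_not_in[OF p] by (auto simp: R_def)
        then show ?thesis by simp
      qed
    qed
  qed simp
  finally show ?thesis .
qed

lemma sq_iff2:
  assumes p: "\<sigma> permutes {1..k}"
  shows "R k \<circ> invf \<sigma> = \<sigma> \<longleftrightarrow> invf \<sigma> \<circ> R k = \<sigma>"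
proof -
  have b: "bij \<sigma>" using permutes_bij[OF p] .
  have bi: "bij (invf \<sigma>)" using bij_imp_bij_inv[OF b] .
  have ii: "invf (invf \<sigma>) = \<sigma>" using inv_inv_eq[OF b] .
  show ?thesis
  proof
    assume h: "R k \<circ> invf \<sigma> = \<sigma>"
    then have "invf \<sigma> = R k \<circ> \<sigma>" using R_comp_R2[of k "invf \<sigma>"] by simp
    then have "invf (invf \<sigma>) = invf (R k \<circ> \<sigma>)" by simp
    then have "\<sigma> = invf \<sigma> \<circ> R k" using ii o_inv_distrib[OF bij_R b] inv_R by simp
    then show "invf \<sigma> \<circ> R k = \<sigma>" by simp
  next
    assume h: "invf \<sigma> \<circ> R k = \<sigma>"
    then have "invf \<sigma> \<circ> R k \<circ> R k = \<sigma> \<circ> R k" by simp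
    then have "invf \<sigma> = \<sigma> \<circ> R k" by (simp add: o_assoc[symmetric] R_comp_R)
    then have "invf (invf \<sigma>) = invf (\<sigma> \<circ> R k)" by simp
    then have "\<sigma> = R k \<circ> invf \<sigma>" using ii o_inv_distrib[OF b bij_R] inv_R by simp
    then show "R k \<circ> invf \<sigma> = \<sigma>" by simp
  qed
qed

lemma invR_iff:
  assumes p: "\<sigma> permutes {1..k}"
  shows "R k \<circ> invf \<sigma> \<circ> R k = \<sigma> \<longleftrightarrow> invf (\<sigma> \<circ> R k) = \<sigma> \<circ> R k"
proof -
  have b: "bij \<sigma>" using permutes_bij[OF p] .
  have e: "invf (\<sigma> \<circ> R k) = R k \<circ> invf \<sigma>" using o_inv_distrib[OF b bij_R] inv_R by simp
  have "R k \<circ> invf \<sigma> \<circ> R k = \<sigma> \<longleftrightarrow> R k \<circ> invf \<sigma> = \<sigma> \<circ> R k"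
  proof
    assume h: "R k \<circ> invf \<sigma> \<circ> R k = \<sigma>"
    then have "R k \<circ> invf \<sigma> \<circ> R k \<circ> R k = \<sigma> \<circ> R k" by simp
    then show "R k \<circ> invf \<sigma> = \<sigma> \<circ> R k" by (simp add: o_assoc[symmetric] R_comp_R)
  next
    assume h: "R k \<circ> invf \<sigma> = \<sigma> \<circ> R k"
    then have "R k \<circ> invf \<sigma> \<circ> R k = \<sigma> \<circ> R k \<circ> R k" by simp
    then show "R k \<circ> invf \<sigma> \<circ> R k = \<sigma>" by (simp add: o_assoc[symmetric] R_comp_R)
  qed
  then show ?thesis using e by simp
qed



abbreviation Fx :: "nat \<Rightarrow> bool \<times> bool \<times> bool \<Rightarrow> bvpat set" where
  "Fx k t \<equiv> {p \<in> E k. ee k t p = p}"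

lemma ee_simp: "ee k (s, a, b) (\<sigma>, X, Y) =
  (rp k b \<circ> (if s then invf \<sigma> else \<sigma>) \<circ> rp k a, mup k a (if s then Y else X), mup k b (if s then X else Y))"
  by (simp add: ee_def)

lemma E_mem: "(\<sigma>, X, Y) \<in> E k \<longleftrightarrow> \<sigma> permutes {1..k} \<and> X \<subseteq> {0..k} \<and> Y \<subseteq> {0..k}"
  by (simp add: bvpats_def)

lemma card_FFF: "card (Fx k (False, False, False)) = fact k * (2 ^ (k + 1) * 2 ^ (k + 1))"
proof -
  have "Fx k (False, False, False) = {\<sigma>. \<sigma> permutes {1..k}} \<times> (Pow {0..k} \<times> Pow {0..k})"
    by (auto simp: bvpats_def ee_one)
  then show ?thesis
    by (simp add: card_cartesian_product card_permutations card_Pow)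
qed

lemma card_FTF: assumes k: "k \<ge> 2" shows "card (Fx k (False, True, False)) = 0"
proof -
  have "Fx k (False, True, False) = {}"
  proof (rule ccontr)
    assume "Fx k (False, True, False) \<noteq> {}"
    then obtain \<sigma> X Y where "(\<sigma>, X, Y) \<in> E k" "ee k (False, True, False) (\<sigma>, X, Y) = (\<sigma>, X, Y)" by auto
    then have p: "\<sigma> permutes {1..k}" and h: "\<sigma> \<circ> R k = \<sigma>"
      by (simp_all add: E_mem ee_simp rp_def mup_def)
    have "\<sigma> (R k 1) = \<sigma> 1" using fun_cong[OF h, of 1] by simp
    then have "R k 1 = 1" using permutes_inj[OF p] by (simp add: inj_eq)
    then show False using k by (simp add: R_def)
  qed
  then show ?thesis by (metis card.empty)
qed

lemma card_FFT: assumes k: "k \<ge> 2" shows "card (Fx k (False, False, True)) = 0"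
proof -
  have "Fx k (False, False, True) = {}"
  proof (rule ccontr)
    assume "Fx k (False, False, True) \<noteq> {}"
    then obtain \<sigma> X Y where "(\<sigma>, X, Y) \<in> E k" "ee k (False, False, True) (\<sigma>, X, Y) = (\<sigma>, X, Y)" by auto
    then have p: "\<sigma> permutes {1..k}" and h: "R k \<circ> \<sigma> = \<sigma>"
      by (simp_all add: E_mem ee_simp rp_def mup_def)
    have "R k (\<sigma> (invf \<sigma> 1)) = \<sigma> (invf \<sigma> 1)" using fun_cong[OF h, of "invf \<sigma> 1"] by simp
    then have "R k 1 = 1" using permutes_inverses(1)[OF p] by simp
    then show False using k by (simp add: R_def)
  qed
  then show ?thesis by (metis card.empty)
qed

lemma card_FTT: "card (Fx k (False, True, True)) = card (CenS (R k) {1..k}) * (card (M k) * card (M k))"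
proof -
  have "Fx k (False, True, True) = CenS (R k) {1..k} \<times> (M k \<times> M k)"
  proof (rule Set.set_eqI)
    fix p :: bvpat
    obtain \<sigma> X Y where pp: "p = (\<sigma>, X, Y)" by (cases p) auto
    show "p \<in> Fx k (False, True, True) \<longleftrightarrow> p \<in> CenS (R k) {1..k} \<times> (M k \<times> M k)"
      unfolding pp using cen_iff[of \<sigma> k]
      by (auto simp: E_mem ee_simp rp_def mup_def CenS_def M_def o_assoc)
  qed
  then show ?thesis by (simp add: card_cartesian_product)
qed

lemma card_TFF: "card (Fx k (True, False, False)) = card (InvS {1..k}) * 2 ^ (k + 1)"
proof -
  have "Fx k (True, False, False) = InvS {1..k} \<times> ((\<lambda>X. (X, X)) ` Pow {0..k})"
  proof (rule Set.set_eqI)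
    fix p :: bvpat
    obtain \<sigma> X Y where pp: "p = (\<sigma>, X, Y)" by (cases p) auto
    show "p \<in> Fx k (True, False, False) \<longleftrightarrow> p \<in> InvS {1..k} \<times> ((\<lambda>X. (X, X)) ` Pow {0..k})"
      unfolding pp using inv_iff[of \<sigma> k]
      by (auto simp: E_mem ee_simp rp_def mup_def InvS_def)
  qed
  then show ?thesis by (simp add: card_cartesian_product card_diag card_Pow)
qed

lemma card_TTF: "card (Fx k (True, True, False)) = card (SqS (R k) {1..k}) * card (M k)"
proof -
  have "Fx k (True, True, False) = SqS (R k) {1..k} \<times> ((\<lambda>X. (X, X)) ` M k)"
  proof (rule Set.set_eqI)
    fix p :: bvpat
    obtain \<sigma> X Y where pp: "p = (\<sigma>, X, Y)" by (cases p) auto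
    show "p \<in> Fx k (True, True, False) \<longleftrightarrow> p \<in> SqS (R k) {1..k} \<times> ((\<lambda>X. (X, X)) ` M k)"
      unfolding pp using sq_iff1[of \<sigma> k]
      by (auto simp: E_mem ee_simp rp_def mup_def SqS_def M_def)
  qed
  then show ?thesis by (simp add: card_cartesian_product card_diag)
qed

lemma card_TFT: "card (Fx k (True, False, True)) = card (SqS (R k) {1..k}) * card (M k)"
proof -
  have "Fx k (True, False, True) = SqS (R k) {1..k} \<times> ((\<lambda>X. (X, X)) ` M k)"
  proof (rule Set.set_eqI)
    fix p :: bvpat
    obtain \<sigma> X Y where pp: "p = (\<sigma>, X, Y)" by (cases p) auto
    show "p \<in> Fx k (True, False, True) \<longleftrightarrow> p \<in> SqS (R k) {1..k} \<times> ((\<lambda>X. (X, X)) ` M k)"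
      unfolding pp using sq_iff1[of \<sigma> k] sq_iff2[of \<sigma> k]
      by (auto simp: E_mem ee_simp rp_def mup_def SqS_def M_def)
  qed
  then show ?thesis by (simp add: card_cartesian_product card_diag)
qed

lemma card_TTT: "card (Fx k (True, True, True)) = card (InvS {1..k}) * 2 ^ (k + 1)"
proof -
  let ?A = "{\<sigma>. \<sigma> permutes {1..k} \<and> invf (\<sigma> \<circ> R k) = \<sigma> \<circ> R k}"
  have "Fx k (True, True, True) = ?A \<times> ((\<lambda>X. (X, mu k X)) ` Pow {0..k})"
  proof (rule Set.set_eqI)
    fix p :: bvpat
    obtain \<sigma> X Y where pp: "p = (\<sigma>, X, Y)" by (cases p) auto
    show "p \<in> Fx k (True, True, True) \<longleftrightarrow> p \<in> ?A \<times> ((\<lambda>X. (X, mu k X)) ` Pow {0..k})"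
      unfolding pp using invR_iff[of \<sigma> k] mu_mu[of X k] mu_mu[of Y k] mu_sub[of X k]
      by (auto simp: E_mem ee_simp rp_def mup_def)
  qed
  moreover have "card ?A = card (InvS {1..k})"
  proof (rule bij_betw_same_card[of "\<lambda>\<sigma>. \<sigma> \<circ> R k"], rule bij_betw_byWitness[where f' = "\<lambda>\<tau>. \<tau> \<circ> R k"])
    show "\<forall>a\<in>?A. a \<circ> R k \<circ> R k = a" by (simp add: o_assoc[symmetric] R_comp_R)
    show "\<forall>a\<in>InvS {1..k}. a \<circ> R k \<circ> R k = a" by (simp add: o_assoc[symmetric] R_comp_R)
    show "(\<lambda>\<sigma>. \<sigma> \<circ> R k) ` ?A \<subseteq> InvS {1..k}"
    proof
      fix \<tau> assume "\<tau> \<in> (\<lambda>\<sigma>. \<sigma> \<circ> R k) ` ?A"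
      then obtain \<sigma> where s: "\<sigma> permutes {1..k}" "invf (\<sigma> \<circ> R k) = \<sigma> \<circ> R k" "\<tau> = \<sigma> \<circ> R k" by blast
      have tp: "\<tau> permutes {1..k}" using s permutes_compose[OF R_permutes s(1)] by simp
      then show "\<tau> \<in> InvS {1..k}" using inv_iff[OF tp] s by (simp add: InvS_def)
    qed
    show "(\<lambda>\<tau>. \<tau> \<circ> R k) ` InvS {1..k} \<subseteq> ?A"
    proof
      fix \<sigma> assume "\<sigma> \<in> (\<lambda>\<tau>. \<tau> \<circ> R k) ` InvS {1..k}"
      then obtain \<tau> where t: "\<tau> \<in> InvS {1..k}" "\<sigma> = \<tau> \<circ> R k" by blast
      have tp: "\<tau> permutes {1..k}" using t by (simp add: InvS_def)
      have sp: "\<sigma> permutes {1..k}" using t permutes_compose[OF R_permutes tp] by simp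
      have "\<sigma> \<circ> R k = \<tau>" using t by (simp add: o_assoc[symmetric] R_comp_R)
      moreover have "invf \<tau> = \<tau>" using inv_iff[OF tp] t by (simp add: InvS_def)
      ultimately show "\<sigma> \<in> ?A" using sp by simp
    qed
  qed
  ultimately show ?thesis by (simp add: card_cartesian_product card_anti card_Pow)
qed



lemma total:
  assumes k: "k \<ge> 2"
  shows "num_sym_classes k * 8 =
    fact k * (2 ^ (k + 1) * 2 ^ (k + 1))
    + 2 ^ (k div 2) * fact (k div 2) * (2 ^ (k div 2 + 1) * 2 ^ (k div 2 + 1))
    + 2 * (num_involutions k * 2 ^ (k + 1))
    + 2 * (sqn (k div 2) * 2 ^ (k div 2 + 1))"
proof -
  have "num_sym_classes k * 8 = (\<Sum>t\<in>UNIV. card (Fx k t))" by (rule burnside_k)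
  also have "\<dots> = card (Fx k (False,False,False)) + card (Fx k (False,False,True)) + card (Fx k (False,True,False))
     + card (Fx k (False,True,True)) + card (Fx k (True,False,False)) + card (Fx k (True,False,True))
     + card (Fx k (True,True,False)) + card (Fx k (True,True,True))"
    by (simp add: UNIV_D)
  also have "\<dots> = fact k * (2 ^ (k + 1) * 2 ^ (k + 1))
    + 2 ^ (k div 2) * fact (k div 2) * (2 ^ (k div 2 + 1) * 2 ^ (k div 2 + 1))
    + 2 * (num_involutions k * 2 ^ (k + 1))
    + 2 * (sqn (k div 2) * 2 ^ (k div 2 + 1))"
    unfolding card_FFF card_FFT[OF k] card_FTF[OF k] card_FTT card_TFF card_TFT card_TTF card_TTT
      card_CenS_R card_SqS_R card_InvS_nat card_M num_involutions_invn
    by simp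
  finally show ?thesis .
qed

lemma pow2_eq: "a = b + c \<Longrightarrow> (2::nat) ^ a = 2 ^ b * 2 ^ c"
  by (simp add: power_add)

lemma case0:
  assumes m: "m \<ge> 1"
  shows "num_sym_classes (4*m) =
            2^(6*m-1) * fact (2*m) + 2^(8*m-1) * fact (4*m) + 2^(4*m-1) * num_involutions (4*m)
            + 2^(2*m) * (fact (2*m-1) div fact (m-1))"
proof -
  obtain n where n: "m = Suc n" using m by (cases m) auto
  have d: "4 * m div 2 = 2 * m" by simp
  have q: "fact (2*m-1) div fact (m-1) * 2 = sqn (2 * m)" using sqn_div[of n] n by simp
  have t: "num_sym_classes (4*m) * 8 =
    fact (4*m) * (2 ^ (4*m + 1) * 2 ^ (4*m + 1))
    + 2 ^ (2*m) * fact (2*m) * (2 ^ (2*m + 1) * 2 ^ (2*m + 1))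
    + 2 * (num_involutions (4*m) * 2 ^ (4*m + 1))
    + 2 * (sqn (2*m) * 2 ^ (2*m + 1))"
    using total[of "4*m"] m by (simp only: d)
  have e1: "(2::nat)^(8*m-1) * 8 = 2 ^ (4*m + 1) * 2 ^ (4*m + 1)"
  proof -
    have "(2::nat)^(8*m+2) = 2^(8*m-1) * 2^3" by (rule pow2_eq) (use m in arith)
    moreover have "(2::nat)^(8*m+2) = 2^(4*m+1) * 2^(4*m+1)" by (rule pow2_eq) arith
    ultimately show ?thesis by simp
  qed
  have e2: "(2::nat)^(6*m-1) * 8 = 2 ^ (2*m) * (2 ^ (2*m + 1) * 2 ^ (2*m + 1))"
  proof -
    have "(2::nat)^(6*m+2) = 2^(6*m-1) * 2^3" by (rule pow2_eq) (use m in arith)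
    moreover have "(2::nat)^(6*m+2) = 2^(2*m) * 2^(4*m+2)" by (rule pow2_eq) arith
    moreover have "(2::nat)^(4*m+2) = 2^(2*m+1) * 2^(2*m+1)" by (rule pow2_eq) arith
    ultimately show ?thesis by simp
  qed
  have e3: "(2::nat)^(4*m-1) * 8 = 2 * 2 ^ (4*m + 1)"
  proof -
    have "(2::nat)^(4*m+2) = 2^(4*m-1) * 2^3" by (rule pow2_eq) (use m in arith)
    moreover have "(2::nat)^(4*m+2) = 2^1 * 2^(4*m+1)" by (rule pow2_eq) arith
    ultimately show ?thesis by simp
  qed
  have e4: "(2::nat)^(2*m) * 8 = 2 * 2 ^ (2*m + 1) * 2"
  proof -
    have "(2::nat)^(2*m+3) = 2^(2*m) * 2^3" by (rule pow2_eq) arith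
    moreover have "(2::nat)^(2*m+3) = 2^(2*m+1) * 2^2" by (rule pow2_eq) arith
    ultimately show ?thesis by simp
  qed
  define Q :: nat where "Q = fact (2*m-1) div fact (m-1)"
  have "(2^(6*m-1) * fact (2*m) + 2^(8*m-1) * fact (4*m) + 2^(4*m-1) * num_involutions (4*m)
            + 2^(2*m) * Q) * 8
        = (2^(6*m-1) * 8) * fact (2*m) + (2^(8*m-1) * 8) * fact (4*m) + (2^(4*m-1) * 8) * num_involutions (4*m)
            + (2^(2*m) * 8) * Q"
    by (simp add: algebra_simps)
  also have "\<dots> = num_sym_classes (4*m) * 8"
    unfolding e1 e2 e3 e4 t q[symmetric] Q_def by (simp add: algebra_simps)
  finally show ?thesis unfolding Q_def by simp
qed


lemma case1:
  assumes m: "m \<ge> 1"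
  shows "num_sym_classes (4*m+1) =
            2^(6*m-1) * fact (2*m) + 2^(8*m+1) * fact (4*m+1) + 2^(4*m) * num_involutions (4*m+1)
            + 2^(2*m) * (fact (2*m-1) div fact (m-1))"
proof -
  obtain n where n: "m = Suc n" using m by (cases m) auto
  have d: "(4 * m + 1) div 2 = 2 * m" by simp
  have d2: "4 * m + 1 + 1 = 4 * m + 2" by simp
  have q: "fact (2*m-1) div fact (m-1) * 2 = sqn (2 * m)" using sqn_div[of n] n by simp
  have t: "num_sym_classes (4*m+1) * 8 =
    fact (4*m+1) * (2 ^ (4*m + 2) * 2 ^ (4*m + 2))
    + 2 ^ (2*m) * fact (2*m) * (2 ^ (2*m + 1) * 2 ^ (2*m + 1))
    + 2 * (num_involutions (4*m+1) * 2 ^ (4*m + 2))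
    + 2 * (sqn (2*m) * 2 ^ (2*m + 1))"
    using total[of "4*m+1"] m by (simp only: d d2)
  have e1: "(2::nat)^(8*m+1) * 8 = 2 ^ (4*m + 2) * 2 ^ (4*m + 2)"
  proof -
    have "(2::nat)^(8*m+4) = 2^(8*m+1) * 2^3" by (rule pow2_eq) arith
    moreover have "(2::nat)^(8*m+4) = 2^(4*m+2) * 2^(4*m+2)" by (rule pow2_eq) arith
    ultimately show ?thesis by simp
  qed
  have e2: "(2::nat)^(6*m-1) * 8 = 2 ^ (2*m) * (2 ^ (2*m + 1) * 2 ^ (2*m + 1))"
  proof -
    have "(2::nat)^(6*m+2) = 2^(6*m-1) * 2^3" by (rule pow2_eq) (use m in arith)
    moreover have "(2::nat)^(6*m+2) = 2^(2*m) * 2^(4*m+2)" by (rule pow2_eq) arith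
    moreover have "(2::nat)^(4*m+2) = 2^(2*m+1) * 2^(2*m+1)" by (rule pow2_eq) arith
    ultimately show ?thesis by simp
  qed
  have e3: "(2::nat)^(4*m) * 8 = 2 * 2 ^ (4*m + 2)"
  proof -
    have "(2::nat)^(4*m+3) = 2^(4*m) * 2^3" by (rule pow2_eq) arith
    moreover have "(2::nat)^(4*m+3) = 2^1 * 2^(4*m+2)" by (rule pow2_eq) arith
    ultimately show ?thesis by simp
  qed
  have e4: "(2::nat)^(2*m) * 8 = 2 * 2 ^ (2*m + 1) * 2"
  proof -
    have "(2::nat)^(2*m+3) = 2^(2*m) * 2^3" by (rule pow2_eq) arith
    moreover have "(2::nat)^(2*m+3) = 2^(2*m+1) * 2^2" by (rule pow2_eq) arith
    ultimately show ?thesis by simp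
  qed
  define Q :: nat where "Q = fact (2*m-1) div fact (m-1)"
  have "(2^(6*m-1) * fact (2*m) + 2^(8*m+1) * fact (4*m+1) + 2^(4*m) * num_involutions (4*m+1)
            + 2^(2*m) * Q) * 8
        = (2^(6*m-1) * 8) * fact (2*m) + (2^(8*m+1) * 8) * fact (4*m+1) + (2^(4*m) * 8) * num_involutions (4*m+1)
            + (2^(2*m) * 8) * Q"
    by (simp add: algebra_simps)
  also have "\<dots> = num_sym_classes (4*m+1) * 8"
    unfolding e1 e2 e3 e4 t q[symmetric] Q_def by (simp add: algebra_simps)
  finally show ?thesis unfolding Q_def by simp
qed

lemma case2:
  shows "num_sym_classes (4*m+2) =
            2^(6*m+2) * fact (2*m+1) + 2^(8*m+3) * fact (4*m+2) + 2^(4*m+1) * num_involutions (4*m+2)"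
proof -
  have d: "(4 * m + 2) div 2 = 2 * m + 1" by simp
  have d2: "(2 * m + 1) + 1 = 2 * m + 2" "4 * m + 2 + 1 = 4 * m + 3" by simp_all
  have t: "num_sym_classes (4*m+2) * 8 =
    fact (4*m+2) * (2 ^ (4*m + 3) * 2 ^ (4*m + 3))
    + 2 ^ (2*m+1) * fact (2*m+1) * (2 ^ (2*m + 2) * 2 ^ (2*m + 2))
    + 2 * (num_involutions (4*m+2) * 2 ^ (4*m + 3))"
    using total[of "4*m+2"] sqn_odd[of m] by (simp only: d d2)
  have e1: "(2::nat)^(8*m+3) * 8 = 2 ^ (4*m + 3) * 2 ^ (4*m + 3)"
  proof -
    have "(2::nat)^(8*m+6) = 2^(8*m+3) * 2^3" by (rule pow2_eq) arith
    moreover have "(2::nat)^(8*m+6) = 2^(4*m+3) * 2^(4*m+3)" by (rule pow2_eq) arith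
    ultimately show ?thesis by simp
  qed
  have e2: "(2::nat)^(6*m+2) * 8 = 2 ^ (2*m+1) * (2 ^ (2*m + 2) * 2 ^ (2*m + 2))"
  proof -
    have "(2::nat)^(6*m+5) = 2^(6*m+2) * 2^3" by (rule pow2_eq) arith
    moreover have "(2::nat)^(6*m+5) = 2^(2*m+1) * 2^(4*m+4)" by (rule pow2_eq) arith
    moreover have "(2::nat)^(4*m+4) = 2^(2*m+2) * 2^(2*m+2)" by (rule pow2_eq) arith
    ultimately show ?thesis by simp
  qed
  have e3: "(2::nat)^(4*m+1) * 8 = 2 * 2 ^ (4*m + 3)"
  proof -
    have "(2::nat)^(4*m+4) = 2^(4*m+1) * 2^3" by (rule pow2_eq) arith
    moreover have "(2::nat)^(4*m+4) = 2^1 * 2^(4*m+3)" by (rule pow2_eq) arith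
    ultimately show ?thesis by simp
  qed
  have "(2^(6*m+2) * fact (2*m+1) + 2^(8*m+3) * fact (4*m+2) + 2^(4*m+1) * num_involutions (4*m+2)) * 8
        = (2^(6*m+2) * 8) * fact (2*m+1) + (2^(8*m+3) * 8) * fact (4*m+2) + (2^(4*m+1) * 8) * num_involutions (4*m+2)"
    by (simp add: algebra_simps)
  also have "\<dots> = num_sym_classes (4*m+2) * 8"
    unfolding e1 e2 e3 t by (simp add: algebra_simps)
  finally show ?thesis by simp
qed

lemma case3:
  shows "num_sym_classes (4*m+3) =
            2^(6*m+2) * fact (2*m+1) + 2^(8*m+5) * fact (4*m+3) + 2^(4*m+2) * num_involutions (4*m+3)"
proof -
  have d: "(4 * m + 3) div 2 = 2 * m + 1" by simp
  have d2: "(2 * m + 1) + 1 = 2 * m + 2" "4 * m + 3 + 1 = 4 * m + 4" by simp_all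
  have t: "num_sym_classes (4*m+3) * 8 =
    fact (4*m+3) * (2 ^ (4*m + 4) * 2 ^ (4*m + 4))
    + 2 ^ (2*m+1) * fact (2*m+1) * (2 ^ (2*m + 2) * 2 ^ (2*m + 2))
    + 2 * (num_involutions (4*m+3) * 2 ^ (4*m + 4))"
    using total[of "4*m+3"] sqn_odd[of m] by (simp only: d d2)
  have e1: "(2::nat)^(8*m+5) * 8 = 2 ^ (4*m + 4) * 2 ^ (4*m + 4)"
  proof -
    have "(2::nat)^(8*m+8) = 2^(8*m+5) * 2^3" by (rule pow2_eq) arith
    moreover have "(2::nat)^(8*m+8) = 2^(4*m+4) * 2^(4*m+4)" by (rule pow2_eq) arith
    ultimately show ?thesis by simp
  qed
  have e2: "(2::nat)^(6*m+2) * 8 = 2 ^ (2*m+1) * (2 ^ (2*m + 2) * 2 ^ (2*m + 2))"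
  proof -
    have "(2::nat)^(6*m+5) = 2^(6*m+2) * 2^3" by (rule pow2_eq) arith
    moreover have "(2::nat)^(6*m+5) = 2^(2*m+1) * 2^(4*m+4)" by (rule pow2_eq) arith
    moreover have "(2::nat)^(4*m+4) = 2^(2*m+2) * 2^(2*m+2)" by (rule pow2_eq) arith
    ultimately show ?thesis by simp
  qed
  have e3: "(2::nat)^(4*m+2) * 8 = 2 * 2 ^ (4*m + 4)"
  proof -
    have "(2::nat)^(4*m+5) = 2^(4*m+2) * 2^3" by (rule pow2_eq) arith
    moreover have "(2::nat)^(4*m+5) = 2^1 * 2^(4*m+4)" by (rule pow2_eq) arith
    ultimately show ?thesis by simp
  qed
  have "(2^(6*m+2) * fact (2*m+1) + 2^(8*m+5) * fact (4*m+3) + 2^(4*m+2) * num_involutions (4*m+3)) * 8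
        = (2^(6*m+2) * 8) * fact (2*m+1) + (2^(8*m+5) * 8) * fact (4*m+3) + (2^(4*m+2) * 8) * num_involutions (4*m+3)"
    by (simp add: algebra_simps)
  also have "\<dots> = num_sym_classes (4*m+3) * 8"
    unfolding e1 e2 e3 t by (simp add: algebra_simps)
  finally show ?thesis by simp
qed

theorem mainTheorem1:
  shows "(\<forall>m::nat. m \<ge> 1 \<longrightarrow> num_sym_classes (4*m) =
            2^(6*m-1) * fact (2*m) + 2^(8*m-1) * fact (4*m) + 2^(4*m-1) * num_involutions (4*m)
            + 2^(2*m) * (fact (2*m-1) div fact (m-1)))
       \<and> (\<forall>m::nat. m \<ge> 1 \<longrightarrow> num_sym_classes (4*m+1) =
            2^(6*m-1) * fact (2*m) + 2^(8*m+1) * fact (4*m+1) + 2^(4*m) * num_involutions (4*m+1)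
            + 2^(2*m) * (fact (2*m-1) div fact (m-1)))
       \<and> (\<forall>m::nat. num_sym_classes (4*m+2) =
            2^(6*m+2) * fact (2*m+1) + 2^(8*m+3) * fact (4*m+2) + 2^(4*m+1) * num_involutions (4*m+2))
       \<and> (\<forall>m::nat. num_sym_classes (4*m+3) =
            2^(6*m+2) * fact (2*m+1) + 2^(8*m+5) * fact (4*m+3) + 2^(4*m+2) * num_involutions (4*m+3))"
  using case0 case1 case2 case3 by blast


end
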